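(* There exists a feature map $f:\mathbb R^{N_0}\times[0,\infty)\to\mathcal H$ (with $\mathcal H$ a Hilbert space, e.g. $\ell^2$) such that for every finite collection of inputs $x_1,\dots,x_P\in\mathbb R^{N_0}$ the kernel matrix $(\Phi_c)_{\alpha\beta}=\langle f(x_\alpha,c),f(x_\beta,c)\rangle$ solves the matrix ODE $\mathrm d\Phi_c=b(\Phi_c)\,\mathrm dc$ with $\Phi_0=\big[\frac1{N_0}\langle x_\alpha,x_\beta\rangle\big]_{\alpha,\beta}$, where $b(\Phi)=D^{1/2}\rho(D^{-1/2}\Phi D^{-1/2})D^{1/2}$, $D=\mathrm{diag}(\Phi)$, and $\rho(x)=\frac{(c_+-c_-)^2}{2\pi}(\sqrt{1-x^2}-x\arccos x)$ applied entrywise. In particular $f$ does not depend on the particular finite set of inputs.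
   Context: $c_+,c_-\in\mathbb R$ are the leaky-ReLU parameters of the shaped activation $\phi_s(x)=x+\frac1s(c_+\max(x,0)+c_-\min(x,0))$. *)

theory Defs
  imports "HOL-Analysis.Analysis"
begin

text \<open>The Hilbert space is realised concretely as l2 over nat: sequences
  with summable squares, with the usual inner product.\<close>

definition in_ell2 :: "(nat \<Rightarrow> real) \<Rightarrow> bool" where
  "in_ell2 u \<longleftrightarrow> summable (\<lambda>k. (u k)\<^sup>2)"

definition ell2_inner :: "(nat \<Rightarrow> real) \<Rightarrow> (nat \<Rightarrow> real) \<Rightarrow> real" where
  "ell2_inner u v = (\<Sum>k. u k * v k)"

definition rho :: "real \<Rightarrow> real \<Rightarrow> real \<Rightarrow> real" where
  "rho cp cm x = (cp - cm)\<^sup>2 / (2 * pi) * (sqrt (1 - x\<^sup>2) - x * arccos x)"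

text \<open>Entry (a,b) of b(Phi) = D^{1/2} rho(D^{-1/2} Phi D^{-1/2}) D^{1/2},
  with D = diag(Phi) and rho applied entrywise; matrices are represented
  as functions nat => nat => real.\<close>
definition drift :: "real \<Rightarrow> real \<Rightarrow> (nat \<Rightarrow> nat \<Rightarrow> real) \<Rightarrow> nat \<Rightarrow> nat \<Rightarrow> real" where
  "drift cp cm \<Phi> a b =
     sqrt (\<Phi> a a) * rho cp cm (\<Phi> a b / (sqrt (\<Phi> a a) * sqrt (\<Phi> b b))) * sqrt (\<Phi> b b)"

end

theory Submission
  imports Defs
begin

definition Pc :: "(real \<Rightarrow> real) \<Rightarrow> bool" where
  "Pc g \<longleftrightarrow> (\<exists>a. (\<forall>j. 0 \<le> a j) \<and> summable a \<and> (\<forall>\<theta>\<in>{-1..1}. (\<lambda>j. a j * \<theta>^j) sums g \<theta>))"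

lemma coef_le: "0 \<le> (a::real) \<Longrightarrow> \<bar>\<theta>::real\<bar> \<le> 1 \<Longrightarrow> a * \<bar>\<theta>\<bar>^j \<le> a"
  by (simp add: mult_left_le power_le_one)

lemma ps_summable:
  fixes \<theta> :: real
  assumes "\<forall>j. 0 \<le> a j" "summable a" "\<bar>\<theta>\<bar> \<le> 1"
  shows "summable (\<lambda>j. \<bar>a j * \<theta>^j\<bar>)"
proof (rule summable_comparison_test'[OF assms(2)])
  fix j show "norm \<bar>a j * \<theta>^j\<bar> \<le> a j"
    using assms by (auto simp: abs_mult power_abs intro!: coef_le)
qed

lemma ps_cont:
  assumes "\<forall>j. 0 \<le> a j" "summable a"
  shows "continuous_on {-1..1} (\<lambda>\<theta>::real. \<Sum>j. a j * \<theta>^j)"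
proof -
  have "uniform_limit {-1..1} (\<lambda>n \<theta>. \<Sum>i<n. a i * \<theta>^i) (\<lambda>\<theta>. \<Sum>i. a i * \<theta>^i) sequentially"
  proof (rule Weierstrass_m_test[where M=a])
    fix n and \<theta> :: real assume "\<theta> \<in> {-1..1}"
    then show "norm (a n * \<theta>^n) \<le> a n"
      using assms by (auto simp: abs_mult power_abs intro!: coef_le)
  qed (use assms in auto)
  then show ?thesis
    by (rule uniform_limit_theorem[rotated]) (auto intro!: always_eventually continuous_intros)
qed

lemma Pc_cont: "Pc g \<Longrightarrow> continuous_on {-1..1} g"
proof -
  assume "Pc g"
  then obtain a where a: "\<forall>j. 0 \<le> a j" "summable a" "\<forall>\<theta>\<in>{-1..1}. (\<lambda>j. a j * \<theta>^j) sums g \<theta>"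
    unfolding Pc_def by blast
  have "continuous_on {-1..1} (\<lambda>\<theta>::real. \<Sum>j. a j * \<theta>^j)" by (rule ps_cont[OF a(1,2)])
  then show ?thesis
    by (rule continuous_on_cong[THEN iffD1, rotated 2]) (use a(3) in \<open>auto simp: sums_iff\<close>)
qed

lemma Pc_bound:
  assumes "Pc g" "\<theta> \<in> {-1..1}"
  shows "\<bar>g \<theta>\<bar> \<le> g 1"
proof -
  obtain a where a: "\<forall>j. 0 \<le> a j" "summable a" "\<forall>\<theta>\<in>{-1..1}. (\<lambda>j. a j * \<theta>^j) sums g \<theta>"
    using assms(1) unfolding Pc_def by blast
  have g1: "g 1 = (\<Sum>j. a j)" using a(3)[rule_format, of 1] by (simp add: sums_iff)
  have gt: "g \<theta> = (\<Sum>j. a j * \<theta>^j)" using a(3) assms(2) by (auto simp: sums_iff)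
  have s: "summable (\<lambda>j. \<bar>a j * \<theta>^j\<bar>)" using ps_summable[OF a(1,2)] assms(2) by auto
  have "\<bar>g \<theta>\<bar> \<le> (\<Sum>j. \<bar>a j * \<theta>^j\<bar>)" unfolding gt by (rule summable_rabs[OF s])
  also have "\<dots> \<le> (\<Sum>j. a j)"
    using assms(2) a s
    by (intro suminf_le) (auto simp: abs_mult power_abs intro!: coef_le)
  finally show ?thesis using g1 by simp
qed

lemma eq_on_closed:
  fixes f g :: "real \<Rightarrow> real"
  assumes "continuous_on {-1..1} f" "continuous_on {-1..1} g"
    "\<And>\<theta>. \<theta> \<in> {-1<..<1} \<Longrightarrow> f \<theta> = g \<theta>" "\<theta> \<in> {-1..1}"
  shows "f \<theta> = g \<theta>"
proof -
  have "(\<lambda>x. f x - g x) \<theta> = 0"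
    by (rule continuous_constant_on_closure[where S="{-1<..<1}"])
       (use assms in \<open>auto intro!: continuous_intros\<close>)
  then show ?thesis by simp
qed

lemma Pc_cong: "Pc g \<Longrightarrow> (\<And>\<theta>. \<theta> \<in> {-1..1} \<Longrightarrow> g \<theta> = h \<theta>) \<Longrightarrow> Pc h"
  unfolding Pc_def by auto

lemma Pc_from_open:
  fixes g :: "real \<Rightarrow> real"
  assumes a0: "\<forall>j. 0 \<le> a j"
    and s: "\<And>\<theta>. \<theta> \<in> {-1<..<1} \<Longrightarrow> (\<lambda>j. a j * \<theta>^j) sums g \<theta>"
    and c: "continuous_on {-1..1} g"
  shows "Pc g"
proof -
  have bnd: "(\<Sum>j<N. a j) \<le> g 1" for N
  proof -
    define x where "x n = 1 - inverse (real (Suc (Suc n)))" for n :: nat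
    have x01: "x n \<in> {0<..<1}" for n unfolding x_def by (auto simp: field_simps)
    have "(\<lambda>n. inverse (real (Suc n))) \<longlonglongrightarrow> 0" by (rule LIMSEQ_inverse_real_of_nat)
    hence "(\<lambda>n. inverse (real (Suc (Suc n)))) \<longlonglongrightarrow> 0" by (rule LIMSEQ_Suc)
    hence xlim: "x \<longlonglongrightarrow> 1"
      unfolding x_def using tendsto_diff[OF tendsto_const[of 1]] by fastforce
    have le: "(\<Sum>j<N. a j * x n ^ j) \<le> g (x n)" for n
    proof -
      have "(\<lambda>j. a j * x n ^ j) sums g (x n)" using s x01[of n] by auto
      then show ?thesis using x01[of n] a0
        by (intro sum_le_suminf[where f="\<lambda>j. a j * x n ^ j", THEN order_trans])
           (auto simp: sums_iff)
    qed
    have l1: "(\<lambda>n. \<Sum>j<N. a j * x n ^ j) \<longlonglongrightarrow> (\<Sum>j<N. a j * 1 ^ j)"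
      by (intro tendsto_intros xlim)
    have l2: "(\<lambda>n. g (x n)) \<longlonglongrightarrow> g 1"
      using c xlim x01 unfolding continuous_on_sequentially comp_def
      by (metis atLeastAtMost_iff greaterThanLessThan_iff less_eq_real_def neg_le_0_iff_le
          order_less_le_trans zero_less_one zero_less_one_class.zero_le_one order_refl)
    have "(\<Sum>j<N. a j * 1 ^ j) \<le> g 1" by (rule LIMSEQ_le[OF l1 l2]) (use le in auto)
    then show ?thesis by simp
  qed
  have sa: "summable a" by (rule summableI_nonneg_bounded[where x="g 1"]) (use a0 bnd in auto)
  show ?thesis unfolding Pc_def
  proof (intro exI conjI ballI)
    fix \<theta> :: real assume th: "\<theta> \<in> {-1..1}"
    have "(\<Sum>j. a j * \<theta>^j) = g \<theta>"
    proof (rule eq_on_closed[OF ps_cont[OF a0 sa] c _ th])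
      fix t :: real assume "t \<in> {-1<..<1}"
      then show "(\<Sum>j. a j * t^j) = g t" using s by (auto simp: sums_iff)
    qed
    moreover have "summable (\<lambda>j. a j * \<theta>^j)"
      using ps_summable[OF a0 sa] th by (auto intro: summable_rabs_cancel)
    ultimately show "(\<lambda>j. a j * \<theta>^j) sums g \<theta>" by (simp add: sums_iff)
  qed (use a0 sa in auto)
qed

lemma tail_bound:
  fixes \<theta> :: real
  assumes a0: "\<forall>j. 0 \<le> a j" and sa: "summable a" and sg: "(\<lambda>j. a j * \<theta>^j) sums G"
    and th: "\<bar>\<theta>\<bar> \<le> 1"
  shows "\<bar>G - (\<Sum>i<n. a i * \<theta>^i)\<bar> \<le> (\<Sum>j. a j) * \<bar>\<theta>\<bar>^n"
proof -
  have sh: "(\<lambda>i. a (i + n) * \<theta>^(i + n)) sums (G - (\<Sum>i<n. a i * \<theta>^i))"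
    using sg sums_iff_shift[of "\<lambda>j. a j * \<theta>^j" n] by simp
  have sa': "(\<lambda>i. a (i + n)) sums ((\<Sum>j. a j) - (\<Sum>i<n. a i))"
    using summable_sums[OF sa] sums_iff_shift[of a n] by simp
  have abs_s: "summable (\<lambda>i. \<bar>a (i + n) * \<theta>^(i + n)\<bar>)"
    using summable_ignore_initial_segment[OF ps_summable[OF a0 sa th], of n] by simp
  have "\<bar>G - (\<Sum>i<n. a i * \<theta>^i)\<bar> = \<bar>\<Sum>i. a (i + n) * \<theta>^(i + n)\<bar>"
    using sh by (simp add: sums_iff)
  also have "\<dots> \<le> (\<Sum>i. \<bar>a (i + n) * \<theta>^(i + n)\<bar>)" by (rule summable_rabs[OF abs_s])
  also have "\<dots> \<le> (\<Sum>i. a (i + n) * \<bar>\<theta>\<bar>^n)"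
  proof (rule suminf_le)
    fix i
    have "\<bar>\<theta>\<bar>^(i+n) \<le> \<bar>\<theta>\<bar>^n" using th by (simp add: power_add mult_left_le_one_le power_le_one)
    then show "\<bar>a (i + n) * \<theta>^(i + n)\<bar> \<le> a (i + n) * \<bar>\<theta>\<bar>^n"
      using a0 by (simp add: abs_mult power_abs mult_left_mono)
  qed (use abs_s sa' in \<open>auto intro!: summable_mult2 simp: sums_iff\<close>)
  also have "\<dots> = ((\<Sum>j. a j) - (\<Sum>i<n. a i)) * \<bar>\<theta>\<bar>^n"
    using sa' by (simp add: sums_iff suminf_mult2[symmetric])
  also have "\<dots> \<le> (\<Sum>j. a j) * \<bar>\<theta>\<bar>^n"
    using a0 by (intro mult_right_mono) (auto intro!: sum_nonneg)
  finally show ?thesis .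
qed

lemma Pc_ulimit:
  fixes G :: "nat \<Rightarrow> real \<Rightarrow> real"
  assumes PG: "\<And>m. Pc (G m)" and ul: "uniform_limit {-1..1} G g sequentially"
  shows "Pc g"
proof -
  from PG have "\<forall>m. \<exists>a. (\<forall>j. 0 \<le> a j) \<and> summable a \<and> (\<forall>\<theta>\<in>{-1..1}. (\<lambda>j. a j * \<theta>^j) sums G m \<theta>)"
    unfolding Pc_def by blast
  then obtain a where a0: "\<And>m j. 0 \<le> a m j" and sa: "\<And>m. summable (a m)"
    and sG: "\<And>m \<theta>. \<theta> \<in> {-1..1} \<Longrightarrow> (\<lambda>j. a m j * \<theta>^j) sums G m \<theta>"
    by metis
  have pt: "(\<lambda>m. G m \<theta>) \<longlonglongrightarrow> g \<theta>" if "\<theta> \<in> {-1..1}" for \<theta>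
    using tendsto_uniform_limitI[OF ul that] .
  have G1: "G m 1 = (\<Sum>j. a m j)" for m using sG[of 1 m] by (simp add: sums_iff)
  have "Bseq (\<lambda>m. G m 1)" using pt[of 1] by (intro convergent_imp_Bseq) (auto simp: convergent_def)
  then obtain B where B0: "B > 0" and Bb: "\<And>m. norm (G m 1) \<le> B" by (auto simp: Bseq_def)
  have sumB: "(\<Sum>j. a m j) \<le> B" for m using Bb[of m] G1[of m] by simp
  have tail: "\<bar>G m \<theta> - (\<Sum>i<n. a m i * \<theta>^i)\<bar> \<le> B * \<bar>\<theta>\<bar>^n" if "\<theta> \<in> {-1..1}" for m n \<theta>
  proof -
    have "\<bar>G m \<theta> - (\<Sum>i<n. a m i * \<theta>^i)\<bar> \<le> (\<Sum>j. a m j) * \<bar>\<theta>\<bar>^n"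
      using that by (intro tail_bound[OF _ sa sG]) (auto simp: a0)
    also have "\<dots> \<le> B * \<bar>\<theta>\<bar>^n" by (intro mult_right_mono sumB) auto
    finally show ?thesis .
  qed
  have conv: "convergent (\<lambda>m. a m j)" for j
  proof (induction j rule: less_induct)
    case (less j)
    then have cl: "(\<lambda>m. a m i) \<longlonglongrightarrow> lim (\<lambda>m. a m i)" if "i < j" for i
      using that convergent_LIMSEQ_iff by blast
    define R where "R m \<theta> = G m \<theta> - (\<Sum>i<j. a m i * \<theta>^i)" for m \<theta>
    have Rc: "convergent (\<lambda>m. R m \<theta>)" if "\<theta> \<in> {-1..1}" for \<theta>
      unfolding R_def convergent_def
      by (rule exI, rule tendsto_diff[OF pt[OF that] tendsto_sum]) (auto intro!: tendsto_intros cl)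
    have Rb: "\<bar>R m \<theta> - a m j * \<theta>^j\<bar> \<le> B * \<bar>\<theta>\<bar>^(Suc j)" if "\<theta> \<in> {-1..1}" for m \<theta>
      using tail[OF that, of m "Suc j"] unfolding R_def by (simp add: algebra_simps)
    show ?case
    proof (rule Cauchy_convergent, rule metric_CauchyI)
      fix e :: real assume e: "e > 0"
      define \<theta> where "\<theta> = min 1 (e / (4 * B))"
      have th0: "\<theta> > 0" using e B0 by (simp add: \<theta>_def)
      have th1: "\<theta> \<in> {-1..1}" using th0 by (auto simp: \<theta>_def)
      have thB: "2 * B * \<theta> \<le> e / 2" using B0 e by (auto simp: \<theta>_def min_def field_simps)
      have pj: "\<theta>^j > 0" using th0 by simp
      obtain M where M: "\<And>m n. m \<ge> M \<Longrightarrow> n \<ge> M \<Longrightarrow> dist (R m \<theta>) (R n \<theta>) < e * \<theta>^j / 2"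
        using metric_CauchyD[OF convergent_Cauchy[OF Rc[OF th1]], of "e * \<theta>^j / 2"] e pj by auto
      show "\<exists>M. \<forall>m\<ge>M. \<forall>n\<ge>M. dist (a m j) (a n j) < e"
      proof (intro exI allI impI)
        fix m n assume mn: "m \<ge> M" "n \<ge> M"
        have "\<bar>a m j - a n j\<bar> * \<theta>^j = \<bar>a m j * \<theta>^j - a n j * \<theta>^j\<bar>"
          using pj by (simp add: abs_mult left_diff_distrib[symmetric])
        also have "\<dots> \<le> \<bar>R m \<theta> - a m j * \<theta>^j\<bar> + \<bar>R n \<theta> - a n j * \<theta>^j\<bar> + \<bar>R m \<theta> - R n \<theta>\<bar>"
          by linarith
        also have "\<dots> < B * \<theta>^(Suc j) + B * \<theta>^(Suc j) + e * \<theta>^j / 2"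
          using Rb[OF th1, of m] Rb[OF th1, of n] M[OF mn] th0 by (simp add: dist_real_def)
        also have "\<dots> = \<theta>^j * (2 * B * \<theta> + e / 2)" by (simp add: algebra_simps)
        also have "\<dots> \<le> \<theta>^j * e" using thB pj by (intro mult_left_mono) auto
        finally show "dist (a m j) (a n j) < e" using pj by (simp add: dist_real_def mult.commute)
      qed
    qed
  qed
  define A where "A j = lim (\<lambda>m. a m j)" for j
  have aA: "(\<lambda>m. a m j) \<longlonglongrightarrow> A j" for j using conv[of j] unfolding A_def convergent_LIMSEQ_iff .
  have A0': "0 \<le> A j" for j by (rule LIMSEQ_le_const[OF aA[of j]]) (use a0 in blast)
  then have A0: "\<forall>j. 0 \<le> A j" by auto
  have gcont: "continuous_on {-1..1} g"
    by (rule uniform_limit_theorem[OF _ ul]) (auto intro!: always_eventually Pc_cont PG)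
  show ?thesis
  proof (rule Pc_from_open[OF A0 _ gcont])
    fix \<theta> :: real assume th: "\<theta> \<in> {-1<..<1}"
    then have th': "\<theta> \<in> {-1..1}" by auto
    have lb: "\<bar>g \<theta> - (\<Sum>i<n. A i * \<theta>^i)\<bar> \<le> B * \<bar>\<theta>\<bar>^n" for n
    proof (rule LIMSEQ_le_const2)
      show "(\<lambda>m. \<bar>G m \<theta> - (\<Sum>i<n. a m i * \<theta>^i)\<bar>) \<longlonglongrightarrow> \<bar>g \<theta> - (\<Sum>i<n. A i * \<theta>^i)\<bar>"
        by (intro tendsto_rabs tendsto_diff pt[OF th'] tendsto_sum tendsto_mult_right aA)
    qed (intro exI[of _ 0] allI impI tail[OF th'])
    have "norm \<bar>\<theta>\<bar> < 1" using th by auto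
    from tendsto_mult_left[OF LIMSEQ_power_zero[OF this], of B]
    have Bl: "(\<lambda>n. B * \<bar>\<theta>\<bar>^n) \<longlonglongrightarrow> 0" by simp
    have "(\<lambda>n. g \<theta> - (\<Sum>i<n. A i * \<theta>^i)) \<longlonglongrightarrow> 0"
    proof (rule Lim_null_comparison[OF _ Bl])
      show "\<forall>\<^sub>F n in sequentially. norm (g \<theta> - (\<Sum>i<n. A i * \<theta>^i)) \<le> B * \<bar>\<theta>\<bar>^n"
        using lb by (intro always_eventually allI) (simp only: real_norm_def)
    qed
    then have "(\<lambda>n. g \<theta> - (g \<theta> - (\<Sum>i<n. A i * \<theta>^i))) \<longlonglongrightarrow> g \<theta> - 0"
      by (intro tendsto_diff tendsto_const)
    then show "(\<lambda>j. A j * \<theta>^j) sums g \<theta>" unfolding sums_def by simp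
  qed
qed

lemma Pc_const: "0 \<le> c \<Longrightarrow> Pc (\<lambda>\<theta>. c)"
  unfolding Pc_def
proof (intro exI[of _ "\<lambda>j. if j = 0 then c else 0"] conjI ballI allI)
  fix \<theta> :: real
  have "(\<lambda>j. if j = 0 then c else 0) sums c" by (rule sums_single)
  then show "(\<lambda>j. (if j = 0 then c else 0) * \<theta>^j) sums c"
    by (rule sums_cong[THEN iffD1, rotated]) auto
qed (auto intro: sums_summable[OF sums_single])

lemma Pc_id: "Pc (\<lambda>\<theta>. \<theta>)"
  unfolding Pc_def
proof (intro exI[of _ "\<lambda>j. if j = 1 then 1 else 0"] conjI ballI allI)
  fix \<theta> :: real
  have "(\<lambda>j. if j = 1 then \<theta> else 0) sums \<theta>" using sums_single[of 1 "\<lambda>_. \<theta>"] by simp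
  then show "(\<lambda>j. (if j = 1 then 1 else 0) * \<theta>^j) sums \<theta>"
    by (rule sums_cong[THEN iffD1, rotated]) auto
  have "(\<lambda>j. if j = 1 then 1 else 0) sums (1::real)" using sums_single[of 1 "\<lambda>_. 1::real"] by simp
  then show "summable (\<lambda>j. if j = 1 then 1 else 0::real)" by (rule sums_summable)
qed auto

lemma Pc_add: "Pc g \<Longrightarrow> Pc h \<Longrightarrow> Pc (\<lambda>\<theta>. g \<theta> + h \<theta>)"
  unfolding Pc_def
proof (elim exE conjE)
  fix a b :: "nat \<Rightarrow> real"
  assume a: "\<forall>j. 0 \<le> a j" "summable a" "\<forall>\<theta>\<in>{-1..1}. (\<lambda>j. a j * \<theta>^j) sums g \<theta>"
    and b: "\<forall>j. 0 \<le> b j" "summable b" "\<forall>\<theta>\<in>{-1..1}. (\<lambda>j. b j * \<theta>^j) sums h \<theta>"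
  show "\<exists>c. (\<forall>j. 0 \<le> c j) \<and> summable c \<and> (\<forall>\<theta>\<in>{-1..1}. (\<lambda>j. c j * \<theta>^j) sums (g \<theta> + h \<theta>))"
  proof (intro exI[of _ "\<lambda>j. a j + b j"] conjI ballI allI)
    fix \<theta> :: real assume "\<theta> \<in> {-1..1}"
    then show "(\<lambda>j. (a j + b j) * \<theta>^j) sums (g \<theta> + h \<theta>)"
      using sums_add[of "\<lambda>j. a j * \<theta>^j" _ "\<lambda>j. b j * \<theta>^j"] a b by (simp add: distrib_right)
  qed (use a b in \<open>auto intro: summable_add\<close>)
qed

lemma Pc_scale: "0 \<le> c \<Longrightarrow> Pc g \<Longrightarrow> Pc (\<lambda>\<theta>. c * g \<theta>)"
  unfolding Pc_def
proof (elim exE conjE)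
  fix a :: "nat \<Rightarrow> real"
  assume c: "0 \<le> c" and a: "\<forall>j. 0 \<le> a j" "summable a" "\<forall>\<theta>\<in>{-1..1}. (\<lambda>j. a j * \<theta>^j) sums g \<theta>"
  show "\<exists>b. (\<forall>j. 0 \<le> b j) \<and> summable b \<and> (\<forall>\<theta>\<in>{-1..1}. (\<lambda>j. b j * \<theta>^j) sums (c * g \<theta>))"
  proof (intro exI[of _ "\<lambda>j. c * a j"] conjI ballI allI)
    fix \<theta> :: real assume "\<theta> \<in> {-1..1}"
    then show "(\<lambda>j. (c * a j) * \<theta>^j) sums (c * g \<theta>)"
      using sums_mult[of "\<lambda>j. a j * \<theta>^j" _ c] a by (simp add: mult.assoc)
  qed (use a c in \<open>auto intro: summable_mult\<close>)
qed

lemma Pc_mult: "Pc g \<Longrightarrow> Pc h \<Longrightarrow> Pc (\<lambda>\<theta>. g \<theta> * h \<theta>)"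
  unfolding Pc_def
proof (elim exE conjE)
  fix a b :: "nat \<Rightarrow> real"
  assume a: "\<forall>j. 0 \<le> a j" "summable a" "\<forall>\<theta>\<in>{-1..1}. (\<lambda>j. a j * \<theta>^j) sums g \<theta>"
    and b: "\<forall>j. 0 \<le> b j" "summable b" "\<forall>\<theta>\<in>{-1..1}. (\<lambda>j. b j * \<theta>^j) sums h \<theta>"
  define c where "c k = (\<Sum>i\<le>k. a i * b (k - i))" for k
  have sc: "(\<lambda>k. c k * \<theta>^k) sums (g \<theta> * h \<theta>)" if th: "\<theta> \<in> {-1..1}" for \<theta> :: real
  proof -
    have na: "summable (\<lambda>i. norm (a i * \<theta>^i))" using ps_summable[OF a(1,2)] th by auto
    have nb: "summable (\<lambda>i. norm (b i * \<theta>^i))" using ps_summable[OF b(1,2)] th by auto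
    have "(\<lambda>k. \<Sum>i\<le>k. (a i * \<theta>^i) * (b (k - i) * \<theta>^(k - i))) sums
          ((\<Sum>i. a i * \<theta>^i) * (\<Sum>i. b i * \<theta>^i))"
      by (rule Cauchy_product_sums[OF na nb])
    also have "(\<Sum>i. a i * \<theta>^i) = g \<theta>" using a(3) th by (simp add: sums_iff)
    also have "(\<Sum>i. b i * \<theta>^i) = h \<theta>" using b(3) th by (simp add: sums_iff)
    also have "(\<lambda>k. \<Sum>i\<le>k. (a i * \<theta>^i) * (b (k - i) * \<theta>^(k - i))) = (\<lambda>k. c k * \<theta>^k)"
    proof
      fix k
      have "(\<Sum>i\<le>k. (a i * \<theta>^i) * (b (k - i) * \<theta>^(k - i))) = (\<Sum>i\<le>k. a i * b (k - i) * \<theta>^k)"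
      proof (rule sum.cong[OF refl])
        fix i assume "i \<in> {..k}"
        then have "\<theta>^i * \<theta>^(k - i) = \<theta>^k" by (simp add: power_add[symmetric])
        then show "(a i * \<theta>^i) * (b (k - i) * \<theta>^(k - i)) = a i * b (k - i) * \<theta>^k"
          by (metis mult.assoc mult.left_commute)
      qed
      then show "(\<Sum>i\<le>k. (a i * \<theta>^i) * (b (k - i) * \<theta>^(k - i))) = c k * \<theta>^k"
        by (simp add: c_def sum_distrib_right)
    qed
    finally show ?thesis .
  qed
  show "\<exists>c. (\<forall>j. 0 \<le> c j) \<and> summable c \<and> (\<forall>\<theta>\<in>{-1..1}. (\<lambda>j. c j * \<theta>^j) sums (g \<theta> * h \<theta>))"
  proof (intro exI[of _ c] conjI ballI allI)
    show "summable c" using sc[of 1] by (simp add: sums_iff)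
  qed (use sc a b in \<open>auto simp: c_def intro!: sum_nonneg\<close>)
qed

lemma Pc_power: "Pc g \<Longrightarrow> Pc (\<lambda>\<theta>. g \<theta> ^ n)"
proof (induction n)
  case 0 then show ?case using Pc_const[of 1] by simp
next
  case (Suc n) then show ?case using Pc_mult[of g "\<lambda>\<theta>. g \<theta> ^ n"] by simp
qed

lemma Pc_sum: "(\<And>i. i < (n::nat) \<Longrightarrow> Pc (f i)) \<Longrightarrow> Pc (\<lambda>\<theta>. \<Sum>i<n. f i \<theta>)"
proof (induction n)
  case 0 then show ?case using Pc_const[of 0] by simp
next
  case (Suc n) then show ?case using Pc_add[of "\<lambda>\<theta>. \<Sum>i<n. f i \<theta>" "f n"] by simp
qed

lemma Pc_series:
  assumes b0: "\<forall>i. 0 \<le> \<beta> i" and sb: "summable \<beta>" and g: "Pc g"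
    and gb: "\<And>\<theta>. \<theta> \<in> {-1..1} \<Longrightarrow> \<bar>g \<theta>\<bar> \<le> 1"
  shows "Pc (\<lambda>\<theta>. \<Sum>i. \<beta> i * g \<theta> ^ i)"
proof (rule Pc_ulimit)
  show "uniform_limit {-1..1} (\<lambda>n \<theta>. \<Sum>i<n. \<beta> i * g \<theta> ^ i) (\<lambda>\<theta>. \<Sum>i. \<beta> i * g \<theta> ^ i) sequentially"
  proof (rule Weierstrass_m_test[OF _ sb])
    fix n and \<theta> :: real assume "\<theta> \<in> {-1..1}"
    then show "norm (\<beta> n * g \<theta> ^ n) \<le> \<beta> n"
      using gb b0 coef_le[of "\<beta> n" "g \<theta>" n] by (simp add: abs_mult power_abs)
  qed
  show "Pc (\<lambda>\<theta>. \<Sum>i<n. \<beta> i * g \<theta> ^ i)" for n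
    by (rule Pc_sum) (auto intro!: Pc_scale Pc_power g simp: b0)
qed


definition Jf :: "real \<Rightarrow> real" where
  "Jf z = 2 / pi * (sqrt (1 - z\<^sup>2) + z * arcsin z)"

lemma rho_eq:
  assumes "z \<in> {-1..1}"
  shows "rho cp cm z = (cp - cm)\<^sup>2 / 4 * (Jf z - z)"
proof -
  have ac: "arccos z = pi/2 - arcsin z" using assms by (auto intro: arccos_arcsin_eq)
  show ?thesis using pi_gt_zero by (simp add: rho_def Jf_def ac field_simps)
qed

lemma Jf_cont: "continuous_on {-1..1} Jf"
  unfolding Jf_def by (intro continuous_intros continuous_on_arcsin') auto

lemma Jf_deriv:
  assumes "-1 < z" "z < 1"
  shows "(Jf has_real_derivative 2 / pi * arcsin z) (at z)"
proof -
  have s: "sqrt (1 - z\<^sup>2) > 0" using assms by (simp add: abs_square_less_1)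
  have d1: "((\<lambda>z. 1 - z\<^sup>2) has_real_derivative -(2*z)) (at z)"
    by (auto intro!: derivative_eq_intros)
  have d2: "((\<lambda>z. sqrt (1 - z\<^sup>2)) has_real_derivative inverse (sqrt (1 - z\<^sup>2)) / 2 * (-(2*z))) (at z)"
    using DERIV_chain2[OF DERIV_real_sqrt d1] s by simp
  have d3: "((\<lambda>z. z * arcsin z) has_real_derivative 1 * arcsin z + inverse (sqrt (1 - z\<^sup>2)) * z) (at z)"
    by (rule DERIV_mult[OF DERIV_ident DERIV_arcsin[OF assms]])
  have "((\<lambda>z. sqrt (1 - z\<^sup>2) + z * arcsin z) has_real_derivative
          (inverse (sqrt (1 - z\<^sup>2)) / 2 * (- (2 * z)) + (arcsin z + z * inverse (sqrt (1 - z\<^sup>2))))) (at z)"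
    using DERIV_add[OF d2 d3] by (simp add: mult.commute)
  also have "inverse (sqrt (1 - z\<^sup>2)) / 2 * (- (2 * z)) + (arcsin z + z * inverse (sqrt (1 - z\<^sup>2))) = arcsin z"
    by (simp add: field_simps)
  finally have "((\<lambda>z. sqrt (1 - z\<^sup>2) + z * arcsin z) has_real_derivative arcsin z) (at z)" .
  then show ?thesis unfolding Jf_def[abs_def] by (rule DERIV_cmult)
qed

lemma Jf_lip:
  assumes "z \<in> {-1..1}" "w \<in> {-1..1}"
  shows "\<bar>Jf z - Jf w\<bar> \<le> \<bar>z - w\<bar>"
proof -
  have main: "\<bar>Jf b - Jf a\<bar> \<le> b - a" if ab: "a < b" "a \<in> {-1..1}" "b \<in> {-1..1}" for a b
  proof -
    have "continuous_on {a..b} Jf" using ab by (intro continuous_on_subset[OF Jf_cont]) auto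
    moreover have "Jf differentiable (at x)" if "a < x" "x < b" for x
      using Jf_deriv[of x] that ab by (auto simp: real_differentiable_def)
    ultimately obtain l x where x: "a < x" "x < b" "DERIV Jf x :> l" "Jf b - Jf a = (b - a) * l"
      using MVT[OF ab(1)] by blast
    have l: "l = 2 / pi * arcsin x" using x ab by (intro DERIV_unique[OF x(3) Jf_deriv]) auto
    have ab2: "\<bar>arcsin x\<bar> \<le> pi / 2" using arcsin_bounded[of x] x ab by auto
    have "\<bar>l\<bar> = 2 / pi * \<bar>arcsin x\<bar>" using l pi_gt_zero by (simp add: abs_mult)
    also have "\<dots> \<le> 2 / pi * (pi / 2)" using ab2 pi_gt_zero by (intro mult_left_mono) auto
    also have "\<dots> = 1" using pi_gt_zero by simp
    finally have "\<bar>l\<bar> \<le> 1" .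
    then show ?thesis using x(4) ab by (simp add: abs_mult mult_left_le)
  qed
  show ?thesis
  proof (cases z w rule: linorder_cases)
    case less then show ?thesis using main[of z w] assms by (simp add: abs_minus_commute)
  next
    case greater then show ?thesis using main[of w z] assms by simp
  qed simp
qed

lemma Jf_1: "Jf 1 = 1"
  unfolding Jf_def by simp

definition gam :: "nat \<Rightarrow> real" where "gam k = ((-(1/2)) gchoose k) * (-1)^k"

lemma gam_nonneg: "0 \<le> gam k"
proof -
  have "gam k = (real k - 1/2) gchoose k"
    unfolding gam_def gbinomial_minus by (simp add: algebra_simps)
  also have "\<dots> = (\<Prod>i=0..<k. (real k - 1/2) - of_nat i) / fact k" by (simp add: gbinomial_prod_rev)
  also have "\<dots> \<ge> 0" by (intro divide_nonneg_pos prod_nonneg) auto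
  finally show ?thesis .
qed

lemma gam_sums:
  assumes "\<bar>t\<bar> < 1"
  shows "(\<lambda>k. gam k * (t\<^sup>2)^k) sums inverse (sqrt (1 - t\<^sup>2))"
proof -
  have "\<bar>-(t\<^sup>2)\<bar> < 1" using assms by (simp add: abs_square_less_1)
  from gen_binomial_real[OF this, of "-(1/2)"]
  have "(\<lambda>n. ((-(1/2)) gchoose n) * (-(t\<^sup>2))^n) sums (1 + -(t\<^sup>2)) powr (-(1/2))" .
  moreover have "((-(1/2)) gchoose n) * (-(t\<^sup>2))^n = gam n * (t\<^sup>2)^n" for n
    unfolding gam_def by (simp add: power_minus')
  moreover have "(1 + -(t\<^sup>2)) powr (-(1/2)) = inverse (sqrt (1 - t\<^sup>2))"
    using \<open>\<bar>-(t\<^sup>2)\<bar> < 1\<close> by (simp add: powr_minus powr_half_sqrt)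
  ultimately show ?thesis by simp
qed

definition d2 :: "nat \<Rightarrow> real" where "d2 n = (if even n then gam (n div 2) else 0)"

lemma d2_nonneg: "0 \<le> d2 n" by (simp add: d2_def gam_nonneg)

lemma d2_sums:
  assumes "\<bar>t\<bar> < 1"
  shows "(\<lambda>n. d2 n * t^n) sums inverse (sqrt (1 - t\<^sup>2))"
proof -
  have "(\<lambda>k. d2 (2 * k) * t^(2 * k)) sums inverse (sqrt (1 - t\<^sup>2))"
    using gam_sums[OF assms] by (simp add: d2_def power_mult)
  moreover have "strict_mono (\<lambda>k::nat. 2 * k)" by (auto simp: strict_mono_def)
  moreover have "d2 n * t^n = 0" if "n \<notin> range (\<lambda>k::nat. 2 * k)" for n
    using that by (auto simp: d2_def elim!: evenE)
  ultimately show ?thesis using sums_mono_reindex[of "\<lambda>k. 2 * k" "\<lambda>n. d2 n * t^n"] by auto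
qed

definition cJ :: "nat \<Rightarrow> real" where
  "cJ n = (if n = 0 then 1 else if n = 1 then 0 else d2 (n - 2) / (real (n - 1) * real n))"

lemma cJ_nonneg: "0 \<le> cJ n" by (simp add: cJ_def d2_nonneg)

lemma diffs_diffs_cJ: "diffs (diffs cJ) = d2"
proof
  fix n
  have c: "cJ (Suc (Suc n)) = d2 n / (real (Suc n) * real (Suc (Suc n)))" by (simp add: cJ_def)
  have "real (Suc n) * real (Suc (Suc n)) \<noteq> 0" by simp
  then show "diffs (diffs cJ) n = d2 n" unfolding diffs_def c
    by (simp only: mult.assoc[symmetric]) simp
qed

lemma cJ_summable:
  assumes "0 \<le> K" "K < 1"
  shows "summable (\<lambda>n. cJ n * K^n)" "summable (\<lambda>n. diffs cJ n * K^n)"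
proof -
  have sd: "summable (\<lambda>n. d2 n * K^n)" using d2_sums[of K] assms by (auto simp: sums_iff)
  have "summable (\<lambda>n. cJ (n + 2) * K^(n + 2))"
  proof (rule summable_comparison_test'[OF sd])
    fix n
    have "cJ (n + 2) * K^(n + 2) = d2 n * K^n * (K\<^sup>2 / (real (n + 1) * real (n + 2)))"
      by (simp add: cJ_def power_add power2_eq_square field_simps)
    also have "\<dots> \<le> d2 n * K^n * 1"
    proof (intro mult_left_mono)
      have k2: "K\<^sup>2 \<le> 1" using assms by (simp add: power_le_one)
      have dn: "1 \<le> real (n + 1) * real (n + 2)"
        using mult_mono[of 1 "real (n + 1)" 1 "real (n + 2)"] by simp
      show "K\<^sup>2 / (real (n + 1) * real (n + 2)) \<le> 1"
        using k2 dn by (simp add: divide_le_eq_1)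
    qed (use assms d2_nonneg[of n] in auto)
    finally show "norm (cJ (n + 2) * K^(n + 2)) \<le> d2 n * K^n"
      using assms cJ_nonneg[of "n+2"] by simp
  qed
  then show "summable (\<lambda>n. cJ n * K^n)" by (subst summable_iff_shift[symmetric, of _ 2])
  have "summable (\<lambda>n. diffs cJ (n + 1) * K^(n + 1))"
  proof (rule summable_comparison_test'[OF sd])
    fix n
    have e: "diffs cJ (n + 1) = d2 n / real (n + 1)"
    proof -
      have "diffs cJ (n + 1) = real (Suc (Suc n)) * (d2 n / (real (Suc n) * real (Suc (Suc n))))"
        by (simp add: diffs_def cJ_def)
      also have "\<dots> = d2 n / real (Suc n)"
        by (metis mult.commute nonzero_mult_div_cancel_left of_nat_neq_0 times_divide_eq_right divide_divide_eq_left)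
      finally show ?thesis by simp
    qed
    have "diffs cJ (n + 1) * K^(n + 1) = d2 n * K^n * (K / real (n + 1))"
      unfolding e by (simp add: power_add field_simps)
    also have "\<dots> \<le> d2 n * K^n * 1"
      using assms d2_nonneg[of n] by (intro mult_left_mono) (auto simp: field_simps)
    finally show "norm (diffs cJ (n + 1) * K^(n + 1)) \<le> d2 n * K^n"
      using assms cJ_nonneg[of "n+2"] by (simp add: diffs_def)
  qed
  then show "summable (\<lambda>n. diffs cJ n * K^n)" by (subst summable_iff_shift[symmetric, of _ 1])
qed

lemma cJ_summable_any:
  assumes "\<bar>t\<bar> < 1"
  shows "summable (\<lambda>n. cJ n * t^n)"
proof (rule summable_comparison_test'[OF cJ_summable(1)[of "\<bar>t\<bar>"]])
  fix n show "norm (cJ n * t^n) \<le> cJ n * \<bar>t\<bar>^n"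
    using cJ_nonneg[of n] by (simp add: abs_mult power_abs)
qed (use assms in auto)

lemma Jf_series:
  assumes "t \<in> {-1<..<1}"
  shows "(\<lambda>n. (2 / pi * cJ n) * t^n) sums Jf t"
proof -
  define S where "S = {-1<..<1::real}"
  have cS: "convex S" unfolding S_def by simp
  define H where "H x = (\<Sum>n. cJ n * x^n)" for x :: real
  define H1 where "H1 x = (\<Sum>n. diffs cJ n * x^n)" for x :: real
  have dH: "(H has_real_derivative H1 x) (at x)" "(H1 has_real_derivative inverse (sqrt (1 - x\<^sup>2))) (at x)"
    if "x \<in> S" for x
  proof -
    define K where "K = (1 + \<bar>x\<bar>) / 2"
    have K: "0 \<le> K" "K < 1" "norm x < norm K" using that by (auto simp: K_def S_def)
    show "(H has_real_derivative H1 x) (at x)"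
      unfolding H_def[abs_def] H1_def by (rule termdiffs_strong[OF cJ_summable(1)[OF K(1,2)] K(3)])
    have "(H1 has_real_derivative (\<Sum>n. diffs (diffs cJ) n * x^n)) (at x)"
      unfolding H1_def[abs_def] by (rule termdiffs_strong[OF cJ_summable(2)[OF K(1,2)] K(3)])
    moreover have "(\<Sum>n. diffs (diffs cJ) n * x^n) = inverse (sqrt (1 - x\<^sup>2))"
      using d2_sums[of x] that unfolding diffs_diffs_cJ by (auto simp: S_def sums_iff)
    ultimately show "(H1 has_real_derivative inverse (sqrt (1 - x\<^sup>2))) (at x)" by simp
  qed
  have "\<exists>c. \<forall>x\<in>S. arcsin x - H1 x = c"
  proof (rule has_field_derivative_zero_constant[OF cS])
    fix x assume x: "x \<in> S"
    have "((\<lambda>x. arcsin x - H1 x) has_real_derivative inverse (sqrt (1 - x\<^sup>2)) - inverse (sqrt (1 - x\<^sup>2))) (at x)"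
      using x by (intro DERIV_diff DERIV_arcsin dH) (auto simp: S_def)
    then show "((\<lambda>x. arcsin x - H1 x) has_real_derivative 0) (at x within S)"
      by (simp add: has_field_derivative_at_within)
  qed
  then obtain c where c: "\<And>x. x \<in> S \<Longrightarrow> arcsin x - H1 x = c" by blast
  have "H1 0 = 0" by (simp add: H1_def diffs_def cJ_def)
  then have "c = 0" using c[of 0] by (simp add: S_def)
  then have aH: "arcsin x = H1 x" if "x \<in> S" for x using c[OF that] by simp
  have "\<exists>c. \<forall>x\<in>S. Jf x - 2 / pi * H x = c"
  proof (rule has_field_derivative_zero_constant[OF cS])
    fix x assume x: "x \<in> S"
    have "((\<lambda>x. Jf x - 2 / pi * H x) has_real_derivative 2 / pi * arcsin x - 2 / pi * H1 x) (at x)"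
      using x by (intro DERIV_diff DERIV_cmult Jf_deriv dH) (auto simp: S_def)
    then show "((\<lambda>x. Jf x - 2 / pi * H x) has_real_derivative 0) (at x within S)"
      using aH[OF x] by (simp add: has_field_derivative_at_within)
  qed
  then obtain d where d: "\<And>x. x \<in> S \<Longrightarrow> Jf x - 2 / pi * H x = d" by blast
  have "H 0 = 1" by (simp add: H_def cJ_def)
  moreover have "Jf 0 = 2 / pi" by (simp add: Jf_def)
  ultimately have "d = 0" using d[of 0] by (simp add: S_def)
  then have "Jf t = 2 / pi * H t" using d[of t] assms by (simp add: S_def)
  moreover have "(\<lambda>n. cJ n * t^n) sums H t"
    unfolding H_def using cJ_summable_any[of t] assms by (auto intro: summable_sums)
  ultimately show ?thesis using sums_mult[of _ "H t" "2 / pi"] by (simp add: mult.assoc)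
qed

lemma Jf_Pc: "Pc Jf"
  by (rule Pc_from_open[OF _ Jf_series Jf_cont]) (auto intro!: divide_nonneg_pos cJ_nonneg)

lemma Jf_bound: "z \<in> {-1..1} \<Longrightarrow> \<bar>Jf z\<bar> \<le> 1"
  using Pc_bound[OF Jf_Pc] Jf_1 by auto


primrec pic :: "real \<Rightarrow> real \<Rightarrow> nat \<Rightarrow> real \<Rightarrow> real" where
  "pic l \<theta> 0 = (\<lambda>t. \<theta>)"
| "pic l \<theta> (Suc m) = (\<lambda>t. exp (-(l * t)) * (\<theta> + integral {0..t} (\<lambda>s. l * exp (l * s) * Jf (pic l \<theta> m s))))"

lemma exp_int:
  fixes l t :: real
  assumes "0 \<le> t"
  shows "integral {0..t} (\<lambda>s. l * exp (l * s)) = exp (l * t) - 1"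
proof -
  have "((\<lambda>s. l * exp (l * s)) has_integral (exp (l * t) - exp (l * 0))) {0..t}"
  proof (rule fundamental_theorem_of_calculus[OF assms])
    fix x :: real assume "x \<in> {0..t}"
    have "((\<lambda>s. exp (l * s)) has_real_derivative exp (l * x) * l) (at x within {0..t})"
      by (auto intro!: derivative_eq_intros)
    then show "((\<lambda>s. exp (l * s)) has_vector_derivative l * exp (l * x)) (at x within {0..t})"
      by (simp add: has_real_derivative_iff_has_vector_derivative mult.commute)
  qed
  then have "((\<lambda>s. l * exp (l * s)) has_integral exp (l * t) - 1) {0..t}" by simp
  then show ?thesis by (rule integral_unique)
qed

lemma Jf_comp_cont:
  assumes "continuous_on {0..T} g" "\<And>s. s \<in> {0..T} \<Longrightarrow> \<bar>g s\<bar> \<le> 1"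
  shows "continuous_on {0..T} (\<lambda>s. l * exp (l * s) * Jf (g s))"
proof -
  have "continuous_on {0..T} (\<lambda>s. Jf (g s))"
    by (rule continuous_on_compose2[OF Jf_cont assms(1)]) (use assms(2) in force)
  then show ?thesis by (intro continuous_intros)
qed

lemma pic_props:
  assumes l: "0 \<le> l" and th: "\<theta> \<in> {-1..1}"
  shows "continuous_on {0..T} (pic l \<theta> m) \<and> (\<forall>t\<ge>0. \<bar>pic l \<theta> m t\<bar> \<le> 1)"
proof (induction m arbitrary: T)
  case 0 then show ?case using th by (auto intro: continuous_intros)
next
  case (Suc m)
  define h where "h s = l * exp (l * s) * Jf (pic l \<theta> m s)" for s
  have hc: "continuous_on {0..T'} h" for T'
    unfolding h_def by (rule Jf_comp_cont) (use Suc.IH in \<open>auto simp: abs_le_iff\<close>)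
  have cont: "continuous_on {0..T} (pic l \<theta> (Suc m))"
    using indefinite_integral_continuous_1[OF integrable_continuous_interval[OF hc[of T]]]
    by (simp add: h_def[symmetric]) (intro continuous_intros)
  have bnd: "\<bar>pic l \<theta> (Suc m) t\<bar> \<le> 1" if t: "t \<ge> 0" for t
  proof -
    have "norm (integral {0..t} h) \<le> integral {0..t} (\<lambda>s. l * exp (l * s))"
    proof (rule integral_norm_bound_integral)
      show "h integrable_on {0..t}" by (rule integrable_continuous_interval[OF hc])
      show "(\<lambda>s. l * exp (l * s)) integrable_on {0..t}"
        by (rule integrable_continuous_interval) (intro continuous_intros)
      fix s assume s: "s \<in> {0..t}"
      have "\<bar>Jf (pic l \<theta> m s)\<bar> \<le> 1" using Suc.IH s by (intro Jf_bound) (auto simp: abs_le_iff)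
      then show "norm (h s) \<le> l * exp (l * s)" using l
        by (simp add: h_def abs_mult mult_left_le)
    qed
    then have ib: "\<bar>integral {0..t} h\<bar> \<le> exp (l * t) - 1" using exp_int[OF t, of l] by simp
    have "\<bar>pic l \<theta> (Suc m) t\<bar> = exp (-(l * t)) * \<bar>\<theta> + integral {0..t} h\<bar>"
      by (simp add: h_def[abs_def] abs_mult)
    also have "\<dots> \<le> exp (-(l * t)) * (1 + (exp (l * t) - 1))"
      using th ib by (intro mult_left_mono) auto
    also have "\<dots> = 1" by (simp add: exp_minus field_simps)
    finally show ?thesis .
  qed
  show ?case using cont bnd by auto
qed

lemma pic_one:
  assumes l: "0 \<le> l" and t: "0 \<le> t"
  shows "pic l 1 m t = 1"
  using t
proof (induction m arbitrary: t)
  case 0 then show ?case by simp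
next
  case (Suc m)
  have "integral {0..t} (\<lambda>s. l * exp (l * s) * Jf (pic l 1 m s)) = integral {0..t} (\<lambda>s. l * exp (l * s))"
    by (rule integral_cong) (use Suc.IH in \<open>auto simp: Jf_1\<close>)
  also have "\<dots> = exp (l * t) - 1" using exp_int[OF Suc.prems, of l] .
  finally have I: "integral {0..t} (\<lambda>s. l * exp (l * s) * Jf (pic l 1 m s)) = exp (l * t) - 1" .
  show ?case unfolding pic.simps I by (simp add: exp_minus field_simps)
qed

lemma pow_int:
  fixes l t :: real
  assumes "0 \<le> t"
  shows "integral {0..t} (\<lambda>s. l * (2 * (l * s)^m / fact m)) = 2 * (l * t)^(Suc m) / fact (Suc m)"
proof -
  have "((\<lambda>s. l * (2 * (l * s)^m / fact m)) has_integral
          (2 * (l * t)^(Suc m) / fact (Suc m) - 2 * (l * 0)^(Suc m) / fact (Suc m))) {0..t}"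
  proof (rule fundamental_theorem_of_calculus[OF assms])
    fix x :: real assume "x \<in> {0..t}"
    have "((\<lambda>s. 2 * (l * s)^(Suc m) / fact (Suc m)) has_real_derivative
            2 * (real (Suc m) * (l * x)^m * l) / fact (Suc m)) (at x within {0..t})"
      by (auto intro!: derivative_eq_intros simp del: power_Suc)
    also have "2 * (real (Suc m) * (l * x)^m * l) / fact (Suc m) = l * (2 * (l * x)^m / fact m)"
      by (simp add: fact_Suc field_simps del: of_nat_Suc)
    finally show "((\<lambda>s. 2 * (l * s)^(Suc m) / fact (Suc m)) has_vector_derivative
            l * (2 * (l * x)^m / fact m)) (at x within {0..t})"
      by (simp add: has_real_derivative_iff_has_vector_derivative)
  qed
  then have "((\<lambda>s. l * (2 * (l * s)^m / fact m)) has_integral 2 * (l * t)^(Suc m) / fact (Suc m)) {0..t}"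
    by simp
  then show ?thesis by (rule integral_unique)
qed

lemma pic_diff:
  assumes l: "0 \<le> l" and th: "\<theta> \<in> {-1..1}"
  shows "t \<ge> 0 \<Longrightarrow> \<bar>pic l \<theta> (Suc m) t - pic l \<theta> m t\<bar> \<le> 2 * (l * t)^m / fact m"
proof (induction m arbitrary: t)
  case 0
  have "\<bar>pic l \<theta> 1 t\<bar> \<le> 1" using pic_props[OF l th] 0 by blast
  then show ?case using th by auto
next
  case (Suc m)
  note t = Suc.prems
  define h1 where "h1 s = l * exp (l * s) * Jf (pic l \<theta> (Suc m) s)" for s
  define h0 where "h0 s = l * exp (l * s) * Jf (pic l \<theta> m s)" for s
  define B where "B s = 2 * (l * s)^m / fact m" for s
  have pb: "\<bar>pic l \<theta> k s\<bar> \<le> 1" if "s \<ge> 0" for k s using pic_props[OF l th] that by blast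
  have hc: "continuous_on {0..t} h1" "continuous_on {0..t} h0"
    unfolding h1_def h0_def using pic_props[OF l th] pb
    by (auto intro!: Jf_comp_cont simp: abs_le_iff simp del: pic.simps)
  have i1: "h1 integrable_on {0..t}" "h0 integrable_on {0..t}"
    using hc by (auto intro: integrable_continuous_interval)
  have iB: "(\<lambda>s. l * exp (l * s) * B s) integrable_on {0..t}" "(\<lambda>s. l * B s) integrable_on {0..t}"
    unfolding B_def by (auto intro!: integrable_continuous_interval continuous_intros)
  have "pic l \<theta> (Suc (Suc m)) t - pic l \<theta> (Suc m) t = exp (-(l * t)) * (integral {0..t} h1 - integral {0..t} h0)"
    by (simp add: h1_def[abs_def] h0_def[abs_def] algebra_simps)
  also have "\<dots> = exp (-(l * t)) * integral {0..t} (\<lambda>s. h1 s - h0 s)"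
    using integral_diff[OF i1] by simp
  finally have eq: "pic l \<theta> (Suc (Suc m)) t - pic l \<theta> (Suc m) t = exp (-(l * t)) * integral {0..t} (\<lambda>s. h1 s - h0 s)" .
  have "norm (integral {0..t} (\<lambda>s. h1 s - h0 s)) \<le> integral {0..t} (\<lambda>s. l * exp (l * s) * B s)"
  proof (rule integral_norm_bound_integral)
    show "(\<lambda>s. h1 s - h0 s) integrable_on {0..t}" using i1 by (rule integrable_diff)
    show "(\<lambda>s. l * exp (l * s) * B s) integrable_on {0..t}" by (rule iB)
    fix s assume s: "s \<in> {0..t}"
    have "\<bar>Jf (pic l \<theta> (Suc m) s) - Jf (pic l \<theta> m s)\<bar> \<le> \<bar>pic l \<theta> (Suc m) s - pic l \<theta> m s\<bar>"
      using pb[of s] s by (intro Jf_lip) (auto simp: abs_le_iff simp del: pic.simps)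
    also have "\<dots> \<le> B s" using Suc.IH[of s] s by (simp add: B_def)
    finally have "\<bar>Jf (pic l \<theta> (Suc m) s) - Jf (pic l \<theta> m s)\<bar> \<le> B s" .
    then have "l * exp (l * s) * \<bar>Jf (pic l \<theta> (Suc m) s) - Jf (pic l \<theta> m s)\<bar> \<le> l * exp (l * s) * B s"
      using l by (intro mult_left_mono) auto
    then show "norm (h1 s - h0 s) \<le> l * exp (l * s) * B s"
      using l by (simp add: h1_def h0_def abs_mult right_diff_distrib[symmetric])
  qed
  then have "\<bar>pic l \<theta> (Suc (Suc m)) t - pic l \<theta> (Suc m) t\<bar> \<le> exp (-(l * t)) * integral {0..t} (\<lambda>s. l * exp (l * s) * B s)"
    unfolding eq by (simp add: abs_mult)
  also have "\<dots> = integral {0..t} (\<lambda>s. exp (-(l * t)) * (l * exp (l * s) * B s))"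
    using integral_mult[OF iB(1)] by simp
  also have "\<dots> \<le> integral {0..t} (\<lambda>s. l * B s)"
  proof (rule integral_le)
    show "(\<lambda>s. exp (-(l * t)) * (l * exp (l * s) * B s)) integrable_on {0..t}"
      unfolding B_def by (auto intro!: integrable_continuous_interval continuous_intros)
    show "(\<lambda>s. l * B s) integrable_on {0..t}" by (rule iB(2))
    fix s assume s: "s \<in> {0..t}"
    have e: "exp (-(l * t)) * exp (l * s) \<le> 1"
      using s l by (simp add: exp_minus field_simps mult_left_mono)
    have "0 \<le> l * B s" using s l by (simp add: B_def)
    then have "(exp (-(l * t)) * exp (l * s)) * (l * B s) \<le> 1 * (l * B s)"
      using e by (intro mult_right_mono) auto
    then show "exp (-(l * t)) * (l * exp (l * s) * B s) \<le> l * B s" by (simp add: mult_ac)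
  qed
  also have "\<dots> = 2 * (l * t)^(Suc m) / fact (Suc m)" unfolding B_def by (rule pow_int[OF t])
  finally show ?case .
qed

definition Sol :: "real \<Rightarrow> real \<Rightarrow> real \<Rightarrow> real" where
  "Sol l \<theta> t = \<theta> + (\<Sum>m. pic l \<theta> (Suc m) t - pic l \<theta> m t)"

lemma pic_ulim:
  assumes l: "0 \<le> l" and th: "\<theta> \<in> {-1..1}"
  shows "uniform_limit {0..T} (\<lambda>n t. pic l \<theta> n t) (Sol l \<theta>) sequentially"
proof -
  have "uniform_limit {0..T} (\<lambda>n t. \<Sum>i<n. pic l \<theta> (Suc i) t - pic l \<theta> i t)
          (\<lambda>t. \<Sum>i. pic l \<theta> (Suc i) t - pic l \<theta> i t) sequentially"
  proof (rule Weierstrass_m_test[where M="\<lambda>m. 2 * (inverse (fact m) * (l * T)^m)"])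
    fix m and t :: real assume t: "t \<in> {0..T}"
    have "norm (pic l \<theta> (Suc m) t - pic l \<theta> m t) \<le> 2 * (l * t)^m / fact m"
      using pic_diff[OF l th, of t m] t by simp
    also have "\<dots> \<le> 2 * (l * T)^m / fact m"
      using t l by (intro divide_right_mono mult_left_mono power_mono mult_left_mono) auto
    finally show "norm (pic l \<theta> (Suc m) t - pic l \<theta> m t) \<le> 2 * (inverse (fact m) * (l * T)^m)"
      by (simp add: field_simps)
  next
    show "summable (\<lambda>m. 2 * (inverse (fact m) * (l * T)^m))"
      by (intro summable_mult summable_exp)
  qed
  then have "uniform_limit {0..T} (\<lambda>n t. \<theta> + (\<Sum>i<n. pic l \<theta> (Suc i) t - pic l \<theta> i t))
          (\<lambda>t. \<theta> + (\<Sum>i. pic l \<theta> (Suc i) t - pic l \<theta> i t)) sequentially"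
    by (intro uniform_limit_add uniform_limit_const)
  moreover have "(\<lambda>n t. \<theta> + (\<Sum>i<n. pic l \<theta> (Suc i) t - pic l \<theta> i t)) = (\<lambda>n t. pic l \<theta> n t)"
  proof (intro ext)
    fix n t
    have "(\<Sum>i<n. pic l \<theta> (Suc i) t - pic l \<theta> i t) = pic l \<theta> n t - pic l \<theta> 0 t"
      by (rule sum_lessThan_telescope[of "\<lambda>i. pic l \<theta> i t"])
    then show "\<theta> + (\<Sum>i<n. pic l \<theta> (Suc i) t - pic l \<theta> i t) = pic l \<theta> n t" by simp
  qed
  ultimately show ?thesis unfolding Sol_def[abs_def] by simp
qed

lemma Sol_cont:
  assumes l: "0 \<le> l" and th: "\<theta> \<in> {-1..1}"
  shows "continuous_on {0..T} (Sol l \<theta>)"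
  by (rule uniform_limit_theorem[OF _ pic_ulim[OF l th]]) (use pic_props[OF l th] in \<open>auto intro!: always_eventually\<close>)

lemma Sol_lim:
  assumes l: "0 \<le> l" and th: "\<theta> \<in> {-1..1}" and t: "0 \<le> t"
  shows "(\<lambda>n. pic l \<theta> n t) \<longlonglongrightarrow> Sol l \<theta> t"
  using tendsto_uniform_limitI[OF pic_ulim[OF l th, of t]] t by simp

lemma Sol_bound:
  assumes l: "0 \<le> l" and th: "\<theta> \<in> {-1..1}" and t: "0 \<le> t"
  shows "\<bar>Sol l \<theta> t\<bar> \<le> 1"
proof (rule LIMSEQ_le_const2)
  show "(\<lambda>n. \<bar>pic l \<theta> n t\<bar>) \<longlonglongrightarrow> \<bar>Sol l \<theta> t\<bar>" by (intro tendsto_rabs Sol_lim[OF l th t])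
  show "\<exists>N. \<forall>n\<ge>N. \<bar>pic l \<theta> n t\<bar> \<le> 1" using pic_props[OF l th] t by blast
qed

lemma Sol_one:
  assumes l: "0 \<le> l" and t: "0 \<le> t"
  shows "Sol l 1 t = 1"
proof -
  have "(\<lambda>n. pic l 1 n t) \<longlonglongrightarrow> Sol l 1 t" by (rule Sol_lim[OF l _ t]) auto
  moreover have "(\<lambda>n. pic l 1 n t) = (\<lambda>n. 1)" using pic_one[OF l t] by auto
  ultimately show ?thesis using LIMSEQ_unique[OF _ tendsto_const] by metis
qed

lemma pic_zero: "pic l \<theta> m 0 = \<theta>"
  by (induction m) auto

lemma Sol_zero: "Sol l \<theta> 0 = \<theta>"
  by (simp add: Sol_def pic_zero del: pic.simps)

lemma Sol_int:
  assumes l: "0 \<le> l" and th: "\<theta> \<in> {-1..1}" and t: "0 \<le> t"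
  shows "Sol l \<theta> t = exp (-(l * t)) * (\<theta> + integral {0..t} (\<lambda>s. l * exp (l * s) * Jf (Sol l \<theta> s)))"
proof -
  define h where "h n s = l * exp (l * s) * Jf (pic l \<theta> n s)" for n s
  define hS where "hS s = l * exp (l * s) * Jf (Sol l \<theta> s)" for s
  have pb: "\<bar>pic l \<theta> k s\<bar> \<le> 1" if "s \<ge> 0" for k s using pic_props[OF l th] that by blast
  have hc: "continuous_on {0..t} (h n)" for n
    unfolding h_def using pic_props[OF l th] pb
    by (intro Jf_comp_cont) (auto simp: abs_le_iff simp del: pic.simps)
  have hSc: "continuous_on {0..t} hS"
    unfolding hS_def using Sol_cont[OF l th] Sol_bound[OF l th]
    by (intro Jf_comp_cont) (auto simp: abs_le_iff)
  have Il: "(\<lambda>n. integral {0..t} (h n)) \<longlonglongrightarrow> integral {0..t} hS"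
  proof (rule metric_LIMSEQ_I)
    fix e :: real assume e: "e > 0"
    define C where "C = l * exp (l * t) * t + 1"
    have "0 \<le> l * exp (l * t) * t" using l t by simp
    then have C: "C > 0" unfolding C_def by linarith
    obtain N where N: "\<And>n s. n \<ge> N \<Longrightarrow> s \<in> {0..t} \<Longrightarrow> dist (pic l \<theta> n s) (Sol l \<theta> s) < e / C"
      using pic_ulim[OF l th, of t] e C unfolding uniform_limit_sequentially_iff
      by (meson divide_pos_pos)
    show "\<exists>N. \<forall>n\<ge>N. dist (integral {0..t} (h n)) (integral {0..t} hS) < e"
    proof (intro exI allI impI)
      fix n assume n: "n \<ge> N"
      have "norm (integral {0..t} (\<lambda>s. h n s - hS s)) \<le> integral {0..t} (\<lambda>s. l * exp (l * t) * (e / C))"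
      proof (rule integral_norm_bound_integral)
        show "(\<lambda>s. h n s - hS s) integrable_on {0..t}"
          using hc hSc by (intro integrable_diff integrable_continuous_interval)
        fix s assume s: "s \<in> {0..t}"
        have "\<bar>Jf (pic l \<theta> n s) - Jf (Sol l \<theta> s)\<bar> \<le> \<bar>pic l \<theta> n s - Sol l \<theta> s\<bar>"
          using pb[of s] Sol_bound[OF l th, of s] s by (intro Jf_lip) (auto simp: abs_le_iff simp del: pic.simps)
        also have "\<dots> \<le> e / C" using N[OF n s] by (simp add: dist_real_def)
        finally have j: "\<bar>Jf (pic l \<theta> n s) - Jf (Sol l \<theta> s)\<bar> \<le> e / C" .
        have "norm (h n s - hS s) = l * exp (l * s) * \<bar>Jf (pic l \<theta> n s) - Jf (Sol l \<theta> s)\<bar>"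
          using l by (simp add: h_def hS_def abs_mult right_diff_distrib[symmetric] del: pic.simps)
        also have "\<dots> \<le> l * exp (l * t) * (e / C)"
          using l s j e C by (intro mult_mono mult_left_mono) (auto intro: mult_left_mono)
        finally show "norm (h n s - hS s) \<le> l * exp (l * t) * (e / C)" .
      qed auto
      also have "\<dots> = t * (l * exp (l * t)) * (e / C)" using t by simp
      also have "\<dots> < e"
      proof -
        have "t * (l * exp (l * t)) < C" unfolding C_def by simp
        then have "t * (l * exp (l * t)) * (e / C) < C * (e / C)"
          using e C by (intro mult_strict_right_mono) auto
        then show ?thesis using C by simp
      qed
      finally have "norm (integral {0..t} (\<lambda>s. h n s - hS s)) < e" .
      then show "dist (integral {0..t} (h n)) (integral {0..t} hS) < e"
        using integral_diff[OF integrable_continuous_interval[OF hc[of n]] integrable_continuous_interval[OF hSc]]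
        by (simp add: dist_norm)
    qed
  qed
  have "(\<lambda>n. pic l \<theta> (Suc n) t) \<longlonglongrightarrow> exp (-(l * t)) * (\<theta> + integral {0..t} hS)"
    unfolding pic.simps h_def[symmetric] by (intro tendsto_intros Il)
  moreover have "(\<lambda>n. pic l \<theta> (Suc n) t) \<longlonglongrightarrow> Sol l \<theta> t"
    using Sol_lim[OF l th t] by (rule LIMSEQ_Suc)
  ultimately show ?thesis unfolding hS_def using LIMSEQ_unique by metis
qed

lemma Sol_deriv:
  assumes l: "0 \<le> l" and th: "\<theta> \<in> {-1..1}" and c: "0 \<le> c"
  shows "(Sol l \<theta> has_real_derivative l * (Jf (Sol l \<theta> c) - Sol l \<theta> c)) (at c within {0..})"
proof -
  define T where "T = c + 1"
  define hS where "hS s = l * exp (l * s) * Jf (Sol l \<theta> s)" for s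
  have hSc: "continuous_on {0..T} hS"
    unfolding hS_def using Sol_cont[OF l th] Sol_bound[OF l th]
    by (intro Jf_comp_cont) (auto simp: abs_le_iff)
  have cT: "c \<in> {0..T}" using c by (simp add: T_def)
  have dI: "((\<lambda>u. integral {0..u} hS) has_real_derivative hS c) (at c within {0..T})"
    by (rule integral_has_real_derivative[OF hSc cT])
  have dE: "((\<lambda>u. exp (-(l * u))) has_real_derivative exp (-(l * c)) * (-(l * 1))) (at c within {0..T})"
    by (auto intro!: derivative_eq_intros)
  have d: "((\<lambda>u. exp (-(l * u)) * (\<theta> + integral {0..u} hS)) has_real_derivative
            exp (-(l * c)) * (-(l * 1)) * (\<theta> + integral {0..c} hS) + (0 + hS c) * exp (-(l * c))) (at c within {0..T})"
    by (intro DERIV_mult DERIV_add DERIV_const dE dI)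
  have val: "exp (-(l * c)) * (-(l * 1)) * (\<theta> + integral {0..c} hS) + (0 + hS c) * exp (-(l * c))
             = l * (Jf (Sol l \<theta> c) - Sol l \<theta> c)"
    using Sol_int[OF l th c] by (simp add: hS_def[abs_def] exp_minus field_simps)
  have filt: "at c within {0..T} = at c within {0..}"
    by (rule at_within_nhd[where S="{c - 1<..<c + 1}"]) (auto simp: T_def)
  have "((\<lambda>u. exp (-(l * u)) * (\<theta> + integral {0..u} hS)) has_real_derivative
            l * (Jf (Sol l \<theta> c) - Sol l \<theta> c)) (at c within {0..})"
    using d unfolding val filt .
  then show ?thesis
  proof (rule has_field_derivative_transform_within[where d=1])
    fix x :: real assume "x \<in> {0..}" "dist x c < 1"
    then show "exp (-(l * x)) * (\<theta> + integral {0..x} hS) = Sol l \<theta> x"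
      using Sol_int[OF l th, of x] by (simp add: hS_def[abs_def])
  qed (use c in auto)
qed


lemma Pc_Jcomp:
  assumes g: "Pc g" and gb: "\<And>\<theta>. \<theta> \<in> {-1..1} \<Longrightarrow> \<bar>g \<theta>\<bar> \<le> 1"
  shows "Pc (\<lambda>\<theta>. Jf (g \<theta>))"
proof -
  obtain a where a: "\<forall>j. 0 \<le> a j" "summable a" "\<forall>z\<in>{-1..1}. (\<lambda>j. a j * z^j) sums Jf z"
    using Jf_Pc unfolding Pc_def by blast
  have "Pc (\<lambda>\<theta>. \<Sum>i. a i * g \<theta> ^ i)" by (rule Pc_series[OF a(1,2) g gb])
  then show ?thesis
  proof (rule Pc_cong)
    fix \<theta> :: real assume "\<theta> \<in> {-1..1}"
    then have "g \<theta> \<in> {-1..1}" using gb[of \<theta>] by (auto simp: abs_le_iff)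
    then show "(\<Sum>i. a i * g \<theta> ^ i) = Jf (g \<theta>)" using a(3) by (auto simp: sums_iff)
  qed
qed

lemma Sol_deriv_at:
  assumes l: "0 \<le> l" and th: "\<theta> \<in> {-1..1}" and c: "0 < c"
  shows "(Sol l \<theta> has_real_derivative l * (Jf (Sol l \<theta> c) - Sol l \<theta> c)) (at c)"
proof -
  have "at c within {0..} = at c" using c by (intro at_within_interior) auto
  then show ?thesis using Sol_deriv[OF l th] c by (metis less_imp_le)
qed

lemma Sol_mvt:
  assumes l: "0 \<le> l" and th: "\<theta> \<in> {-1..1}" and ab: "0 \<le> a" "a < b"
  shows "\<exists>x. a < x \<and> x < b \<and> Sol l \<theta> b - Sol l \<theta> a = (b - a) * (l * (Jf (Sol l \<theta> x) - Sol l \<theta> x))"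
proof -
  have "continuous_on {a..b} (Sol l \<theta>)"
    by (rule continuous_on_subset[OF Sol_cont[OF l th, of b]]) (use ab in auto)
  moreover have "Sol l \<theta> differentiable (at x)" if "a < x" "x < b" for x
    using Sol_deriv_at[OF l th, of x] that ab by (auto simp: real_differentiable_def)
  ultimately obtain d x where x: "a < x" "x < b" "DERIV (Sol l \<theta>) x :> d" "Sol l \<theta> b - Sol l \<theta> a = (b - a) * d"
    using MVT[OF ab(2)] by blast
  have "d = l * (Jf (Sol l \<theta> x) - Sol l \<theta> x)"
    using x ab by (intro DERIV_unique[OF x(3) Sol_deriv_at[OF l th]]) auto
  then show ?thesis using x by blast
qed

lemma F_bound:
  assumes l: "0 \<le> l" and z: "z \<in> {-1..1}"
  shows "\<bar>l * (Jf z - z)\<bar> \<le> 2 * l"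
proof -
  have "\<bar>Jf z - z\<bar> \<le> 2" using Jf_bound[OF z] z by (auto simp: abs_le_iff)
  then have "l * \<bar>Jf z - z\<bar> \<le> l * 2" using l by (rule mult_left_mono)
  then show ?thesis using l by (simp add: abs_mult mult.commute)
qed

lemma F_lip:
  assumes l: "0 \<le> l" and z: "z \<in> {-1..1}" and w: "w \<in> {-1..1}"
  shows "\<bar>l * (Jf z - z) - l * (Jf w - w)\<bar> \<le> 2 * l * \<bar>z - w\<bar>"
proof -
  have "\<bar>(Jf z - z) - (Jf w - w)\<bar> \<le> \<bar>Jf z - Jf w\<bar> + \<bar>z - w\<bar>" by linarith
  also have "\<dots> \<le> 2 * \<bar>z - w\<bar>" using Jf_lip[OF z w] by simp
  finally have "l * \<bar>(Jf z - z) - (Jf w - w)\<bar> \<le> l * (2 * \<bar>z - w\<bar>)" using l by (rule mult_left_mono)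
  then show ?thesis using l
    by (simp add: abs_mult right_diff_distrib[symmetric] mult_ac)
qed

lemma Sol_lip:
  assumes l: "0 \<le> l" and th: "\<theta> \<in> {-1..1}" and ab: "0 \<le> a" "a \<le> b"
  shows "\<bar>Sol l \<theta> b - Sol l \<theta> a\<bar> \<le> 2 * l * (b - a)"
proof (cases "a = b")
  case False
  then have "a < b" using ab by simp
  then obtain x where x: "a < x" "x < b" "Sol l \<theta> b - Sol l \<theta> a = (b - a) * (l * (Jf (Sol l \<theta> x) - Sol l \<theta> x))"
    using Sol_mvt[OF l th ab(1)] by blast
  have "Sol l \<theta> x \<in> {-1..1}" using Sol_bound[OF l th, of x] x ab by (auto simp: abs_le_iff)
  then have "\<bar>l * (Jf (Sol l \<theta> x) - Sol l \<theta> x)\<bar> \<le> 2 * l" by (rule F_bound[OF l])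
  then show ?thesis using x ab by (simp add: abs_mult mult.commute mult_left_mono)
qed simp

lemma Sol_local:
  assumes l: "0 \<le> l" and th: "\<theta> \<in> {-1..1}" and ab: "0 \<le> a" "0 \<le> h"
  shows "\<bar>Sol l \<theta> (a + h) - Sol l \<theta> a - h * (l * (Jf (Sol l \<theta> a) - Sol l \<theta> a))\<bar> \<le> 4 * l\<^sup>2 * h\<^sup>2"
proof (cases "h = 0")
  case False
  then have "a < a + h" using ab by simp
  then obtain x where x: "a < x" "x < a + h"
      "Sol l \<theta> (a + h) - Sol l \<theta> a = (a + h - a) * (l * (Jf (Sol l \<theta> x) - Sol l \<theta> x))"
    using Sol_mvt[OF l th ab(1)] by blast
  have r: "Sol l \<theta> x \<in> {-1..1}" "Sol l \<theta> a \<in> {-1..1}"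
    using Sol_bound[OF l th, of x] Sol_bound[OF l th, of a] x ab by (auto simp: abs_le_iff)
  have "\<bar>Sol l \<theta> (a + h) - Sol l \<theta> a - h * (l * (Jf (Sol l \<theta> a) - Sol l \<theta> a))\<bar>
      = h * \<bar>l * (Jf (Sol l \<theta> x) - Sol l \<theta> x) - l * (Jf (Sol l \<theta> a) - Sol l \<theta> a)\<bar>"
    using x(3) ab by (simp add: abs_mult right_diff_distrib[symmetric])
  also have "\<dots> \<le> h * (2 * l * \<bar>Sol l \<theta> x - Sol l \<theta> a\<bar>)"
    using F_lip[OF l r] ab by (intro mult_left_mono) auto
  also have "\<dots> \<le> h * (2 * l * (2 * l * (x - a)))"
    using Sol_lip[OF l th ab(1), of x] x ab l by (intro mult_left_mono) auto
  also have "\<dots> \<le> h * (2 * l * (2 * l * h))"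
    using x ab l by (intro mult_left_mono) auto
  also have "\<dots> = 4 * l\<^sup>2 * h\<^sup>2" by (simp add: power2_eq_square)
  finally show ?thesis .
qed simp

lemma abs_comb: "0 \<le> (a::real) \<Longrightarrow> 0 \<le> c \<Longrightarrow> \<bar>a * x + c * y\<bar> \<le> a * \<bar>x\<bar> + c * \<bar>y\<bar>"
  by (metis abs_mult abs_of_nonneg abs_triangle_ineq)

definition Eu :: "real \<Rightarrow> real \<Rightarrow> real \<Rightarrow> real" where
  "Eu l h z = z + h * (l * (Jf z - z))"

lemma Eu_alt: "Eu l h z = (1 - l * h) * z + (l * h) * Jf z"
  by (simp add: Eu_def algebra_simps)

lemma Eu_range:
  assumes "0 \<le> l * h" "l * h \<le> 1" "z \<in> {-1..1}"
  shows "Eu l h z \<in> {-1..1}"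
proof -
  have j: "\<bar>Jf z\<bar> \<le> 1" using Jf_bound[OF assms(3)] .
  have "\<bar>Eu l h z\<bar> \<le> (1 - l * h) * \<bar>z\<bar> + (l * h) * \<bar>Jf z\<bar>"
    unfolding Eu_alt using assms by (intro abs_comb) auto
  also have "\<dots> \<le> (1 - l * h) * 1 + (l * h) * 1"
    using assms j by (intro add_mono mult_left_mono) auto
  finally show ?thesis by (auto simp: abs_le_iff)
qed

lemma Eu_lip:
  assumes "0 \<le> l * h" "l * h \<le> 1" "y \<in> {-1..1}" "z \<in> {-1..1}"
  shows "\<bar>Eu l h y - Eu l h z\<bar> \<le> \<bar>y - z\<bar>"
proof -
  have e: "Eu l h y - Eu l h z = (1 - l * h) * (y - z) + (l * h) * (Jf y - Jf z)"
    unfolding Eu_alt by (simp add: algebra_simps)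
  have "\<bar>Eu l h y - Eu l h z\<bar> \<le> (1 - l * h) * \<bar>y - z\<bar> + (l * h) * \<bar>Jf y - Jf z\<bar>"
    unfolding e using assms by (intro abs_comb) auto
  also have "\<dots> \<le> (1 - l * h) * \<bar>y - z\<bar> + (l * h) * \<bar>y - z\<bar>"
    using assms Jf_lip[OF assms(3,4)] by (intro add_mono mult_left_mono) auto
  finally show ?thesis by (simp add: algebra_simps)
qed

lemma euler_err:
  assumes l: "0 \<le> l" and th: "\<theta> \<in> {-1..1}" and h: "0 \<le> h" "l * h \<le> 1"
  shows "((Eu l h ^^ k) \<theta>) \<in> {-1..1} \<and> \<bar>(Eu l h ^^ k) \<theta> - Sol l \<theta> (real k * h)\<bar> \<le> real k * (4 * l\<^sup>2 * h\<^sup>2)"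
proof (induction k)
  case 0 then show ?case using th by (simp add: Sol_zero)
next
  case (Suc k)
  define Y where "Y = (Eu l h ^^ k) \<theta>"
  define a where "a = real k * h"
  have a0: "0 \<le> a" using h by (simp add: a_def)
  have lh: "0 \<le> l * h" using l h by simp
  have Y: "Y \<in> {-1..1}" "\<bar>Y - Sol l \<theta> a\<bar> \<le> real k * (4 * l\<^sup>2 * h\<^sup>2)"
    using Suc.IH by (auto simp: Y_def a_def)
  have Sa: "Sol l \<theta> a \<in> {-1..1}" using Sol_bound[OF l th a0] by (auto simp: abs_le_iff)
  have eq: "(Eu l h ^^ Suc k) \<theta> = Eu l h Y" by (simp add: Y_def)
  have ak: "real (Suc k) * h = a + h" by (simp add: a_def algebra_simps)
  have "\<bar>Eu l h Y - Sol l \<theta> (a + h)\<bar> \<le> \<bar>Eu l h Y - Eu l h (Sol l \<theta> a)\<bar> + \<bar>Eu l h (Sol l \<theta> a) - Sol l \<theta> (a + h)\<bar>"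
    by linarith
  also have "\<dots> \<le> \<bar>Y - Sol l \<theta> a\<bar> + 4 * l\<^sup>2 * h\<^sup>2"
  proof (rule add_mono)
    show "\<bar>Eu l h Y - Eu l h (Sol l \<theta> a)\<bar> \<le> \<bar>Y - Sol l \<theta> a\<bar>" by (rule Eu_lip[OF lh h(2) Y(1) Sa])
    have "\<bar>Eu l h (Sol l \<theta> a) - Sol l \<theta> (a + h)\<bar> = \<bar>Sol l \<theta> (a + h) - Sol l \<theta> a - h * (l * (Jf (Sol l \<theta> a) - Sol l \<theta> a))\<bar>"
      by (simp add: Eu_def)
    also have "\<dots> \<le> 4 * l\<^sup>2 * h\<^sup>2" by (rule Sol_local[OF l th a0 h(1)])
    finally show "\<bar>Eu l h (Sol l \<theta> a) - Sol l \<theta> (a + h)\<bar> \<le> 4 * l\<^sup>2 * h\<^sup>2" .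
  qed
  also have "\<dots> \<le> real (Suc k) * (4 * l\<^sup>2 * h\<^sup>2)" using Y(2) by (simp add: algebra_simps)
  finally show ?case using Eu_range[OF lh h(2) Y(1)] eq ak by simp
qed

lemma Pc_euler:
  assumes l: "0 \<le> l" and h: "0 \<le> h" "l * h \<le> 1"
  shows "Pc (Eu l h ^^ k) \<and> (\<forall>\<theta>\<in>{-1..1}. (Eu l h ^^ k) \<theta> \<in> {-1..1})"
proof (induction k)
  case 0 then show ?case using Pc_id by (simp add: id_def)
next
  case (Suc k)
  have lh: "0 \<le> l * h" using l h by simp
  define g where "g = Eu l h ^^ k"
  have g: "Pc g" "\<And>\<theta>. \<theta> \<in> {-1..1} \<Longrightarrow> g \<theta> \<in> {-1..1}" using Suc.IH by (auto simp: g_def)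
  have "Pc (\<lambda>\<theta>. (1 - l * h) * g \<theta> + (l * h) * Jf (g \<theta>))"
    using g h lh by (intro Pc_add Pc_scale Pc_Jcomp) (auto simp: abs_le_iff)
  then have "Pc (Eu l h ^^ Suc k)" by (rule Pc_cong) (simp add: g_def Eu_alt)
  moreover have "\<forall>\<theta>\<in>{-1..1}. (Eu l h ^^ Suc k) \<theta> \<in> {-1..1}"
    using g Eu_range[OF lh h(2)] by (simp add: g_def)
  ultimately show ?case by blast
qed

lemma aux_cancel: "(M::real) > 0 \<Longrightarrow> M * (a * (t / M)\<^sup>2) = a * t\<^sup>2 / M"
  by (simp add: power2_eq_square field_simps)

lemma Sol_Pc:
  assumes l: "0 \<le> l" and t: "0 \<le> t"
  shows "Pc (\<lambda>\<theta>. Sol l \<theta> t)"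
proof -
  define K :: nat where "K = nat \<lceil>l * t\<rceil> + 1"
  define G where "G m = Eu l (t / real (m + K)) ^^ (m + K)" for m
  have K: "l * t \<le> real K" "K \<ge> 1" unfolding K_def by linarith+
  have pos: "real (m + K) > 0" for m using K by simp
  have hm: "0 \<le> t / real (m + K)" "l * (t / real (m + K)) \<le> 1" for m
  proof -
    show "0 \<le> t / real (m + K)" using t pos[of m] by simp
    have "l * t \<le> real (m + K)" using K by simp
    then show "l * (t / real (m + K)) \<le> 1" using pos[of m] by (simp add: field_simps)
  qed
  show ?thesis
  proof (rule Pc_ulimit)
    show "Pc (G m)" for m unfolding G_def using Pc_euler[OF l hm] by blast
    show "uniform_limit {-1..1} G (\<lambda>\<theta>. Sol l \<theta> t) sequentially"
      unfolding uniform_limit_sequentially_iff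
    proof (intro allI impI)
      fix e :: real assume e: "e > 0"
      define N :: nat where "N = nat \<lceil>4 * l\<^sup>2 * t\<^sup>2 / e\<rceil>"
      show "\<exists>N. \<forall>n\<ge>N. \<forall>\<theta>\<in>{-1..1}. dist (G n \<theta>) (Sol l \<theta> t) < e"
      proof (intro exI allI impI ballI)
        fix n :: nat and \<theta> :: real assume n: "N \<le> n" and th: "\<theta> \<in> {-1..1}"
        define h where "h = t / real (n + K)"
        have rk: "real (n + K) * h = t" using pos[of n] by (simp add: h_def)
        have "\<bar>G n \<theta> - Sol l \<theta> t\<bar> \<le> real (n + K) * (4 * l\<^sup>2 * h\<^sup>2)"
          using euler_err[OF l th hm[of n], of "n + K"] rk by (simp add: G_def h_def)
        also have "\<dots> = 4 * l\<^sup>2 * t\<^sup>2 / real (n + K)"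
          unfolding h_def by (rule aux_cancel[OF pos[of n]])
        also have "\<dots> < e"
        proof -
          have "4 * l\<^sup>2 * t\<^sup>2 / e \<le> real N" unfolding N_def by linarith
          also have "\<dots> < real (n + K)" using n K by simp
          finally have "4 * l\<^sup>2 * t\<^sup>2 < e * real (n + K)" using e by (simp add: field_simps)
          then show ?thesis using pos[of n] by (simp add: field_simps)
        qed
        finally show "dist (G n \<theta>) (Sol l \<theta> t) < e" by (simp add: dist_real_def)
      qed
    qed
  qed
qed


lemma prod_list_map_mult: "prod_list (map f ls) * prod_list (map g ls) = prod_list (map (\<lambda>i. f i * g i) ls)"
  for f g :: "'a \<Rightarrow> real"
  by (induction ls) (simp_all add: mult_ac)

lemma lists_sum:
  fixes w :: "'n::finite \<Rightarrow> real"
  shows "(\<Sum>ls\<in>{ls::'n list. length ls = j}. prod_list (map w ls)) = (\<Sum>i\<in>UNIV. w i)^j"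
proof (induction j)
  case 0
  have "{ls::'n list. length ls = 0} = {[]}" by auto
  then show ?case by simp
next
  case (Suc j)
  have im: "{ls::'n list. length ls = Suc j} = (\<lambda>(i, ls). i # ls) ` (UNIV \<times> {ls. length ls = j})"
    by (auto simp: length_Suc_conv)
  have inj: "inj_on (\<lambda>(i, ls). i # ls) (UNIV \<times> {ls::'n list. length ls = j})"
    by (auto simp: inj_on_def)
  have "(\<Sum>ls\<in>{ls::'n list. length ls = Suc j}. prod_list (map w ls))
      = (\<Sum>p\<in>UNIV \<times> {ls::'n list. length ls = j}. prod_list (map w ((\<lambda>(i, ls). i # ls) p)))"
    unfolding im by (rule sum.reindex[OF inj, unfolded comp_def])
  also have "\<dots> = (\<Sum>(i, ls)\<in>UNIV \<times> {ls::'n list. length ls = j}. w i * prod_list (map w ls))"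
    by (rule sum.cong) auto
  also have "\<dots> = (\<Sum>i\<in>UNIV. \<Sum>ls\<in>{ls::'n list. length ls = j}. w i * prod_list (map w ls))"
    by (rule sum.cartesian_product[symmetric])
  also have "\<dots> = (\<Sum>i\<in>UNIV. w i) * (\<Sum>ls\<in>{ls::'n list. length ls = j}. prod_list (map w ls))"
    by (simp add: sum_product)
  finally show ?case using Suc.IH by simp
qed

lemma inner_lists_sum:
  fixes u v :: "real^'n"
  shows "(\<Sum>ls\<in>{ls::'n list. length ls = j}. prod_list (map (\<lambda>i. u$i * v$i) ls)) = (u \<bullet> v)^j"
  using lists_sum[of "\<lambda>i. u$i * v$i" j] by (simp add: inner_vec_def)

lemma feature_has_sum:
  fixes u v :: "real^'n" and A :: "nat \<Rightarrow> real"
  assumes A0: "\<And>j. 0 \<le> A j" and sA: "summable A" and u: "norm u \<le> 1" and v: "norm v \<le> 1"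
  shows "((\<lambda>ls::'n list. A (length ls) * C * prod_list (map (\<lambda>i. u$i * v$i) ls)) has_sum
          (C * (\<Sum>j. A j * (u \<bullet> v)^j))) UNIV"
proof -
  define L where "L j = {ls::'n list. length ls = j}" for j
  define h where "h ls = A (length ls) * C * prod_list (map (\<lambda>i. u$i * v$i) ls)" for ls :: "'n list"
  define ua :: "real^'n" where "ua = (\<chi> i. \<bar>u$i\<bar>)"
  define va :: "real^'n" where "va = (\<chi> i. \<bar>v$i\<bar>)"
  define ha where "ha ls = A (length ls) * \<bar>C\<bar> * prod_list (map (\<lambda>i. ua$i * va$i) ls)" for ls :: "'n list"
  have fin: "finite (L j)" for j unfolding L_def by (rule finite_list_length)
  have UL: "(\<Union>j\<in>UNIV. L j) = UNIV" by (auto simp: L_def)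
  have disj: "disjoint_family_on L UNIV" by (auto simp: disjoint_family_on_def L_def)
  have hL: "(h has_sum (C * (A j * (u \<bullet> v)^j))) (L j)" for j
  proof -
    have "sum h (L j) = A j * C * (\<Sum>ls\<in>L j. prod_list (map (\<lambda>i. u$i * v$i) ls))"
      by (simp add: h_def L_def sum_distrib_left)
    also have "\<dots> = C * (A j * (u \<bullet> v)^j)" by (simp add: L_def inner_lists_sum)
    finally show ?thesis using has_sum_finite[OF fin[of j], of h] by simp
  qed
  have haL: "(ha has_sum (\<bar>C\<bar> * (A j * (ua \<bullet> va)^j))) (L j)" for j
  proof -
    have "sum ha (L j) = A j * \<bar>C\<bar> * (\<Sum>ls\<in>L j. prod_list (map (\<lambda>i. ua$i * va$i) ls))"
      by (simp add: ha_def L_def sum_distrib_left)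
    also have "\<dots> = \<bar>C\<bar> * (A j * (ua \<bullet> va)^j)" by (simp add: L_def inner_lists_sum)
    finally show ?thesis using has_sum_finite[OF fin[of j], of ha] by simp
  qed
  have uv: "0 \<le> ua \<bullet> va" "ua \<bullet> va \<le> 1"
  proof -
    show "0 \<le> ua \<bullet> va" by (simp add: ua_def va_def inner_vec_def sum_nonneg)
    have "norm ua = norm u" "norm va = norm v"
      by (simp_all add: ua_def va_def norm_vec_def L2_set_def)
    then have "ua \<bullet> va \<le> norm u * norm v" using norm_cauchy_schwarz[of ua va] by simp
    also have "\<dots> \<le> 1" using u v by (simp add: mult_le_one)
    finally show "ua \<bullet> va \<le> 1" .
  qed
  have gsum: "(\<lambda>j. \<bar>C\<bar> * (A j * (ua \<bullet> va)^j)) summable_on UNIV"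
  proof -
    have "summable (\<lambda>j. \<bar>C\<bar> * (A j * (ua \<bullet> va)^j))"
      using ps_summable[of A "ua \<bullet> va"] A0 sA uv by (auto intro!: summable_mult simp: abs_mult)
    then show ?thesis using A0 uv by (subst summable_on_UNIV_nonneg_real_iff) auto
  qed
  have ha0: "0 \<le> ha ls" for ls
    using A0 by (auto simp: ha_def ua_def va_def intro!: prod_list_nonneg mult_nonneg_nonneg)
  have ha_sum: "ha summable_on UNIV"
    using summable_on_UnionI[of UNIV ha L, OF haL gsum ha0 disj] unfolding UL .
  have hb: "norm (h ls) \<le> ha ls" for ls
  proof -
    have "\<bar>prod_list (map (\<lambda>i. u$i * v$i) ls)\<bar> = prod_list (map (\<lambda>i. ua$i * va$i) ls)"
      by (induction ls) (simp_all add: ua_def va_def abs_mult)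
    then show ?thesis using A0 by (simp add: h_def ha_def abs_mult)
  qed
  have "(\<lambda>ls. norm (h ls)) summable_on UNIV"
    by (rule Infinite_Sum.abs_summable_on_comparison_test'[OF ha_sum hb])
  then have h_sum: "h summable_on UNIV"
    by (rule Infinite_Sum.abs_summable_summable)
  then obtain S where hS: "(h has_sum S) UNIV" by (auto simp: summable_on_def)
  have inj: "inj_on snd (Sigma UNIV L)" by (auto simp: inj_on_def L_def)
  have im: "snd ` Sigma UNIV L = UNIV" by (force simp: L_def)
  have "((h \<circ> snd) has_sum S) (Sigma UNIV L)" using hS has_sum_reindex[OF inj, of h S] im by simp
  then have "((\<lambda>j. C * (A j * (u \<bullet> v)^j)) has_sum S) UNIV"
    by (rule has_sum_Sigma') (use hL in \<open>simp add: comp_def\<close>)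
  then have "(\<lambda>j. C * (A j * (u \<bullet> v)^j)) sums S" by (rule has_sum_imp_sums)
  moreover have "(\<lambda>j. C * (A j * (u \<bullet> v)^j)) sums (C * (\<Sum>j. A j * (u \<bullet> v)^j))"
  proof -
    have "\<bar>u \<bullet> v\<bar> \<le> 1" using Cauchy_Schwarz_ineq2[of u v] u v
      by (smt (verit) mult_le_one norm_ge_zero)
    then have "summable (\<lambda>j. A j * (u \<bullet> v)^j)"
      using ps_summable[of A "u \<bullet> v"] A0 sA by (auto intro: summable_rabs_cancel)
    then show ?thesis by (intro sums_mult summable_sums)
  qed
  ultimately have "S = C * (\<Sum>j. A j * (u \<bullet> v)^j)" using sums_unique2 by blast
  then show ?thesis using hS by (simp add: h_def[abs_def])
qed


definition coef :: "real \<Rightarrow> real \<Rightarrow> nat \<Rightarrow> real" where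
  "coef l t = (SOME a. (\<forall>j. 0 \<le> a j) \<and> summable a \<and> (\<forall>\<theta>\<in>{-1..1}. (\<lambda>j. a j * \<theta>^j) sums Sol l \<theta> t))"

lemma coef_prop:
  assumes "0 \<le> l" "0 \<le> t"
  shows "(\<forall>j. 0 \<le> coef l t j) \<and> summable (coef l t) \<and> (\<forall>\<theta>\<in>{-1..1}. (\<lambda>j. coef l t j * \<theta>^j) sums Sol l \<theta> t)"
proof -
  define P where "P = (\<lambda>a::nat \<Rightarrow> real. (\<forall>j. 0 \<le> a j) \<and> summable a \<and> (\<forall>\<theta>\<in>{-1..1}. (\<lambda>j. a j * \<theta>^j) sums Sol l \<theta> t))"
  have "\<exists>a. P a" using Sol_Pc[OF assms] unfolding Pc_def P_def by blast
  then have "P (SOME a. P a)" by (rule someI_ex)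
  then show ?thesis unfolding coef_def P_def by simp
qed

definition feat :: "real \<Rightarrow> real \<Rightarrow> real^'n \<Rightarrow> 'n list \<Rightarrow> real" where
  "feat l c x ls = sqrt (coef l c (length ls)) * (norm x / sqrt (real CARD('n))) * prod_list (map (\<lambda>i. sgn x $ i) ls)"

definition fmap :: "real \<Rightarrow> real^'n \<Rightarrow> real \<Rightarrow> nat \<Rightarrow> real" where
  "fmap l x c k = (if k \<in> range (to_nat :: 'n list \<Rightarrow> nat) then feat l c x (from_nat k) else 0)"

lemma sgn_inner_bound:
  fixes x y :: "real^'n"
  shows "sgn x \<bullet> sgn y \<in> {-1..1}"
proof -
  have "\<bar>sgn x \<bullet> sgn y\<bar> \<le> norm (sgn x) * norm (sgn y)" by (rule Cauchy_Schwarz_ineq2)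
  also have "\<dots> \<le> 1" by (simp add: norm_sgn)
  finally show ?thesis by (auto simp: abs_le_iff)
qed

lemma fmap_inner:
  fixes x y :: "real^'n"
  assumes l: "0 \<le> l" and c: "0 \<le> c"
  shows "(\<lambda>k. fmap l x c k * fmap l y c k) sums (norm x * norm y / real CARD('n) * Sol l (sgn x \<bullet> sgn y) c)"
proof -
  define A where "A = coef l c"
  define C where "C = norm x * norm y / real CARD('n)"
  define u where "u = sgn x"
  define v where "v = sgn y"
  have A: "\<And>j. 0 \<le> A j" "summable A" "\<And>\<theta>. \<theta> \<in> {-1..1} \<Longrightarrow> (\<lambda>j. A j * \<theta>^j) sums Sol l \<theta> c"
    using coef_prop[OF l c] by (auto simp: A_def)
  have nu: "norm u \<le> 1" "norm v \<le> 1" by (simp_all add: u_def v_def norm_sgn)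
  have fh: "((\<lambda>ls::'n list. A (length ls) * C * prod_list (map (\<lambda>i. u$i * v$i) ls)) has_sum
          (C * (\<Sum>j. A j * (u \<bullet> v)^j))) UNIV"
    by (rule feature_has_sum[OF A(1,2) nu])
  have "(\<Sum>j. A j * (u \<bullet> v)^j) = Sol l (u \<bullet> v) c"
    using A(3)[OF sgn_inner_bound[of x y]] by (simp add: sums_iff u_def v_def)
  then have fh': "((\<lambda>ls::'n list. A (length ls) * C * prod_list (map (\<lambda>i. u$i * v$i) ls)) has_sum
          (C * Sol l (u \<bullet> v) c)) UNIV" using fh by simp
  have n0: "real CARD('n) > 0" by simp
  have fe: "feat l c x ls * feat l c y ls = A (length ls) * C * prod_list (map (\<lambda>i. u$i * v$i) ls)" for ls :: "'n list"
  proof -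
    have "feat l c x ls * feat l c y ls =
          (sqrt (A (length ls)) * sqrt (A (length ls))) * (norm x * norm y / (sqrt (real CARD('n)) * sqrt (real CARD('n))))
          * (prod_list (map (\<lambda>i. u $ i) ls) * prod_list (map (\<lambda>i. v $ i) ls))"
      by (simp add: feat_def A_def u_def v_def mult_ac)
    also have "\<dots> = A (length ls) * C * prod_list (map (\<lambda>i. u$i * v$i) ls)"
      using A(1)[of "length ls"] n0 by (simp add: prod_list_map_mult C_def)
    finally show ?thesis .
  qed
  define F where "F k = fmap l x c k * fmap l y c k" for k
  have "(F \<circ> to_nat) = (\<lambda>ls::'n list. A (length ls) * C * prod_list (map (\<lambda>i. u$i * v$i) ls))"
    by (auto simp: F_def fmap_def fe)
  then have "(F has_sum (C * Sol l (u \<bullet> v) c)) (range (to_nat :: 'n list \<Rightarrow> nat))"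
    using has_sum_reindex[of "to_nat :: 'n list \<Rightarrow> nat" UNIV F] fh' by simp
  then have "(F has_sum (C * Sol l (u \<bullet> v) c)) UNIV"
    by (rule has_sum_cong_neutral[THEN iffD1, rotated -1]) (auto simp: F_def fmap_def)
  then have "F sums (C * Sol l (u \<bullet> v) c)" by (rule has_sum_imp_sums)
  then show ?thesis unfolding F_def[abs_def] C_def u_def v_def .
qed

lemma sgn_inner_scale:
  fixes x y :: "real^'n"
  shows "norm x * norm y * (sgn x \<bullet> sgn y) = x \<bullet> y"
proof (cases "x = 0 \<or> y = 0")
  case False
  then show ?thesis by (auto simp: sgn_div_norm inner_scaleR_left inner_scaleR_right field_simps)
qed auto

lemma sgn_inner_self:
  fixes x :: "real^'n"
  assumes "x \<noteq> 0"
  shows "sgn x \<bullet> sgn x = 1"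
  using assms by (simp add: power2_norm_eq_inner[symmetric] norm_sgn)

lemma fmap_ell:
  fixes x y :: "real^'n"
  assumes l: "0 \<le> l" and c: "0 \<le> c"
  shows "ell2_inner (fmap l x c) (fmap l y c) = norm x * norm y / real CARD('n) * Sol l (sgn x \<bullet> sgn y) c"
  using fmap_inner[OF l c, of x y] unfolding ell2_inner_def by (simp add: sums_iff)

lemma fmap_diag:
  fixes x :: "real^'n"
  assumes l: "0 \<le> l" and c: "0 \<le> c"
  shows "ell2_inner (fmap l x c) (fmap l x c) = (norm x)\<^sup>2 / real CARD('n)"
proof (cases "x = 0")
  case True then show ?thesis using fmap_ell[OF l c, of x x] by simp
next
  case False
  then show ?thesis using fmap_ell[OF l c, of x x] sgn_inner_self[OF False] Sol_one[OF l c]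
    by (simp add: power2_eq_square)
qed

lemma drift_val:
  fixes x y :: "real^'n"
  assumes l: "l = (cp - cm)\<^sup>2 / 4" and c: "0 \<le> c"
    and aa: "\<Phi> a a = (norm x)\<^sup>2 / real CARD('n)" and bb: "\<Phi> b b = (norm y)\<^sup>2 / real CARD('n)"
    and ab: "\<Phi> a b = norm x * norm y / real CARD('n) * Sol l (sgn x \<bullet> sgn y) c"
  shows "drift cp cm \<Phi> a b = norm x * norm y / real CARD('n) * (l * (Jf (Sol l (sgn x \<bullet> sgn y) c) - Sol l (sgn x \<bullet> sgn y) c))"
proof -
  have l0: "0 \<le> l" unfolding l by simp
  define n where "n = real CARD('n)"
  have n0: "n > 0" by (simp add: n_def)
  define S where "S = Sol l (sgn x \<bullet> sgn y) c"
  have sa: "sqrt (\<Phi> a a) = norm x / sqrt n" unfolding aa n_def[symmetric]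
    by (simp add: real_sqrt_divide)
  have sb: "sqrt (\<Phi> b b) = norm y / sqrt n" unfolding bb n_def[symmetric]
    by (simp add: real_sqrt_divide)
  show ?thesis
  proof (cases "x = 0 \<or> y = 0")
    case True
    then show ?thesis unfolding drift_def sa sb by auto
  next
    case False
    then have nx: "norm x > 0" "norm y > 0" by auto
    have sn: "sqrt n * sqrt n = n" using n0 by simp
    have q: "\<Phi> a b / (sqrt (\<Phi> a a) * sqrt (\<Phi> b b)) = S"
      unfolding ab sa sb n_def[symmetric] S_def using nx n0 sn by (simp add: field_simps)
    have "S \<in> {-1..1}" using Sol_bound[OF l0 sgn_inner_bound c] by (auto simp: S_def abs_le_iff)
    then have r: "rho cp cm S = l * (Jf S - S)" using rho_eq[of S cp cm] unfolding l by simp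
    have "drift cp cm \<Phi> a b = sqrt (\<Phi> a a) * rho cp cm S * sqrt (\<Phi> b b)"
      unfolding drift_def q ..
    also have "\<dots> = norm x / sqrt n * (l * (Jf S - S)) * (norm y / sqrt n)"
      unfolding r sa sb ..
    also have "\<dots> = norm x * norm y / n * (l * (Jf S - S))"
      using sn n0 by (simp add: field_simps)
    finally show ?thesis by (simp add: S_def n_def)
  qed
qed

theorem mainTheorem3:
  fixes cp cm :: real
  shows "\<exists>f :: real^'n \<Rightarrow> real \<Rightarrow> (nat \<Rightarrow> real).
    (\<forall>x c. c \<ge> 0 \<longrightarrow> in_ell2 (f x c)) \<and>
    (\<forall>(P::nat) (xs :: nat \<Rightarrow> real^'n).
       let \<Phi> = (\<lambda>c a b. ell2_inner (f (xs a) c) (f (xs b) c)) in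
       (\<forall>a<P. \<forall>b<P.
          \<Phi> 0 a b = (xs a \<bullet> xs b) / real CARD('n) \<and>
          (\<forall>c\<ge>0. ((\<lambda>t. \<Phi> t a b) has_real_derivative drift cp cm (\<Phi> c) a b)
                     (at c within {0..}))))"
proof -
  define l where "l = (cp - cm)\<^sup>2 / 4"
  have l0: "0 \<le> l" by (simp add: l_def)
  show ?thesis
  proof (intro exI[of _ "fmap l"] conjI allI impI, unfold Let_def)
    fix x :: "real^'n" and c :: real assume c: "0 \<le> c"
    show "in_ell2 (fmap l x c)"
      using fmap_inner[OF l0 c, of x x] unfolding in_ell2_def by (auto simp: sums_iff power2_eq_square)
  next
    fix P :: nat and xs :: "nat \<Rightarrow> real^'n"
    show "\<forall>a<P. \<forall>b<P. ell2_inner (fmap l (xs a) 0) (fmap l (xs b) 0) = xs a \<bullet> xs b / real CARD('n) \<and>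
           (\<forall>c\<ge>0. ((\<lambda>t. ell2_inner (fmap l (xs a) t) (fmap l (xs b) t)) has_real_derivative
              drift cp cm (\<lambda>a b. ell2_inner (fmap l (xs a) c) (fmap l (xs b) c)) a b) (at c within {0..}))"
    proof (intro allI impI conjI)
      fix a b assume "a < P" "b < P"
      define x where "x = xs a"
      define y where "y = xs b"
      define C where "C = norm x * norm y / real CARD('n)"
      define \<theta> where "\<theta> = sgn x \<bullet> sgn y"
      have th: "\<theta> \<in> {-1..1}" unfolding \<theta>_def by (rule sgn_inner_bound)
      show "ell2_inner (fmap l (xs a) 0) (fmap l (xs b) 0) = xs a \<bullet> xs b / real CARD('n)"
        using fmap_ell[OF l0 order_refl, of x y] sgn_inner_scale[of x y]
        by (simp add: Sol_zero x_def y_def)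
      fix c :: real assume c: "0 \<le> c"
      have dS: "((\<lambda>t. C * Sol l \<theta> t) has_real_derivative C * (l * (Jf (Sol l \<theta> c) - Sol l \<theta> c))) (at c within {0..})"
        by (rule DERIV_cmult[OF Sol_deriv[OF l0 th c]])
      have dr: "drift cp cm (\<lambda>a b. ell2_inner (fmap l (xs a) c) (fmap l (xs b) c)) a b
                = C * (l * (Jf (Sol l \<theta> c) - Sol l \<theta> c))"
        unfolding C_def \<theta>_def
        by (rule drift_val[OF l_def c]) (simp_all add: fmap_diag[OF l0 c] fmap_ell[OF l0 c] x_def y_def)
      show "((\<lambda>t. ell2_inner (fmap l (xs a) t) (fmap l (xs b) t)) has_real_derivative
              drift cp cm (\<lambda>a b. ell2_inner (fmap l (xs a) c) (fmap l (xs b) c)) a b) (at c within {0..})"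
        unfolding dr
      proof (rule has_field_derivative_transform_within[OF dS zero_less_one])
        fix t :: real assume "t \<in> {0..}" "dist t c < 1"
        then show "C * Sol l \<theta> t = ell2_inner (fmap l (xs a) t) (fmap l (xs b) t)"
          using fmap_ell[OF l0, of t x y] by (simp add: C_def \<theta>_def x_def y_def)
      qed (use c in auto)
    qed
  qed
qed


end
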